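(* Let $\mathcal E$ be a nonlinear order preserving form on $L^2(\mu)$. The following are equivalent: (i) there exists a measurable $g\colon X\to(0,\infty)$ with $Gg<\infty$ $\mu$-a.e.; (ii) there exists a measurable $w\colon X\to(0,\infty)$ such that $\int_X|f|w\,d\mu\le\|f\|_L$ for all $f\in M(\mathcal E)$. If $\mathcal E_e$ exists, then the inequality in (ii) extends to all $f\in M(\mathcal E_e)$ with $\|\cdot\|_L$ replaced by $\|\cdot\|_{L_e}$.
   Context: $(X,\mathfrak A,\mu)$ is $\sigma$-finite. A nonlinear order preserving form is a lower semicontinuous convex $\mathcal E\colon L^2(\mu)\to[0,\infty]$ with $\mathcal E(-f)=\mathcal E(f)$, $\mathcal E(0)=0$ and $\mathcal E(f+|g|)+\mathcal E(f-|g|)\le\mathcal E(f+g)+\mathcal E(f-g)$ for all $f,g$. $M(\mathcal E)=\{f:\lim_{\lambda\to0+}\mathcal E(\lambda f)=0\}$, $\|f\|_L=\inf\{\lambda>0:\mathcal E(\lambda^{-1}f)\le1\}$. Resolvent: $G_\alpha f$ is the unique minimizer of $g\mapsto\mathcal E(g)+\frac\alpha2\|g-\alpha^{-1}f\|_2^2$; extended to nonnegative measurable $[0,\infty]$-valued functions by monotone limits; Green operator $Gf=\lim_{\alpha\to0+}G_\alpha f$. $\mathcal E_e$ (if it exists) is the lower semicontinuous relaxation on $L^0(\mu)$ w.r.t. local convergence in measure of $\mathcal E$ extended by $+\infty$, existing when $\mathcal E$ is lower semicontinuous on $D(\mathcal E)$ for this convergence; $M(\mathcal E_e)$ and $\|\cdot\|_{L_e}$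 are its modular space and Luxemburg seminorm, defined as for $\mathcal E$. *)

theory Defs
  imports "HOL-Analysis.Analysis"
begin

text \<open>Elements of L^2(mu) are represented by real functions; everything is
  invariant under a.e. equality (imposed on the form below).\<close>

definition L2 :: "'a measure \<Rightarrow> ('a \<Rightarrow> real) set" where
  "L2 M = {f. f \<in> borel_measurable M \<and> integrable M (\<lambda>x. (f x)\<^sup>2)}"

definition dist2sq :: "'a measure \<Rightarrow> ('a \<Rightarrow> real) \<Rightarrow> ('a \<Rightarrow> real) \<Rightarrow> real" where
  "dist2sq M f g = (\<integral>x. (f x - g x)\<^sup>2 \<partial>M)"

definition nonlinear_order_preserving_form ::
  "'a measure \<Rightarrow> (('a \<Rightarrow> real) \<Rightarrow> ennreal) \<Rightarrow> bool" where
  "nonlinear_order_preserving_form M E \<longleftrightarrow>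
     (\<forall>f\<in>L2 M. \<forall>g\<in>L2 M. (AE x in M. f x = g x) \<longrightarrow> E f = E g) \<and>
     (\<forall>f fs. f \<in> L2 M \<and> (\<forall>n. fs n \<in> L2 M) \<and> ((\<lambda>n. dist2sq M (fs n) f) \<longlonglongrightarrow> 0)
        \<longrightarrow> E f \<le> liminf (\<lambda>n. E (fs n))) \<and>
     (\<forall>f\<in>L2 M. \<forall>g\<in>L2 M. \<forall>t::real. 0 < t \<and> t < 1 \<longrightarrow>
        E (\<lambda>x. t * f x + (1 - t) * g x) \<le> ennreal t * E f + ennreal (1 - t) * E g) \<and>
     (\<forall>f\<in>L2 M. E (\<lambda>x. - f x) = E f) \<and>
     E (\<lambda>x. 0) = 0 \<and>
     (\<forall>f\<in>L2 M. \<forall>g\<in>L2 M.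
        E (\<lambda>x. f x + \<bar>g x\<bar>) + E (\<lambda>x. f x - \<bar>g x\<bar>) \<le> E (\<lambda>x. f x + g x) + E (\<lambda>x. f x - g x))"

definition is_resolvent ::
  "'a measure \<Rightarrow> (('a \<Rightarrow> real) \<Rightarrow> ennreal) \<Rightarrow> real \<Rightarrow> ('a \<Rightarrow> real) \<Rightarrow> ('a \<Rightarrow> real) \<Rightarrow> bool" where
  "is_resolvent M E \<alpha> f u \<longleftrightarrow> u \<in> L2 M \<and>
     (\<forall>g\<in>L2 M. E u + ennreal (\<alpha> / 2 * dist2sq M u (\<lambda>x. f x / \<alpha>))
                 \<le> E g + ennreal (\<alpha> / 2 * dist2sq M g (\<lambda>x. f x / \<alpha>)))"

definition resolvent ::
  "'a measure \<Rightarrow> (('a \<Rightarrow> real) \<Rightarrow> ennreal) \<Rightarrow> real \<Rightarrow> ('a \<Rightarrow> real) \<Rightarrow> ('a \<Rightarrow> real)" where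
  "resolvent M E \<alpha> f = (SOME u. is_resolvent M E \<alpha> f u)"

definition exhaustion :: "'a measure \<Rightarrow> nat \<Rightarrow> 'a set" where
  "exhaustion M = (SOME A. range A \<subseteq> sets M \<and> \<Union>(range A) = space M \<and>
      (\<forall>i. emeasure M (A i) \<noteq> \<infinity>) \<and> incseq A)"

definition approx :: "'a measure \<Rightarrow> ('a \<Rightarrow> ennreal) \<Rightarrow> nat \<Rightarrow> 'a \<Rightarrow> real" where
  "approx M g n = (\<lambda>x. indicator (exhaustion M n) x * enn2real (min (g x) (of_nat n)))"

definition resolvent_ext ::
  "'a measure \<Rightarrow> (('a \<Rightarrow> real) \<Rightarrow> ennreal) \<Rightarrow> real \<Rightarrow> ('a \<Rightarrow> ennreal) \<Rightarrow> 'a \<Rightarrow> ennreal" where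
  "resolvent_ext M E \<alpha> g = (\<lambda>x. SUP n. ennreal (resolvent M E \<alpha> (approx M g n) x))"

text \<open>Green operator: limit (monotone) as alpha \<rightarrow> 0+, along alpha = 1/(m+1)\<close>
definition green ::
  "'a measure \<Rightarrow> (('a \<Rightarrow> real) \<Rightarrow> ennreal) \<Rightarrow> ('a \<Rightarrow> ennreal) \<Rightarrow> 'a \<Rightarrow> ennreal" where
  "green M E g = (\<lambda>x. SUP m::nat. resolvent_ext M E (1 / real (Suc m)) g x)"

definition modular_space :: "(('a \<Rightarrow> real) \<Rightarrow> ennreal) \<Rightarrow> ('a \<Rightarrow> real) set \<Rightarrow> ('a \<Rightarrow> real) set" where
  "modular_space F D = {f \<in> D. ((\<lambda>l::real. F (\<lambda>x. l * f x)) \<longlongrightarrow> 0) (at_right 0)}"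

definition lux_norm :: "(('a \<Rightarrow> real) \<Rightarrow> ennreal) \<Rightarrow> ('a \<Rightarrow> real) \<Rightarrow> ennreal" where
  "lux_norm F f = Inf {ennreal l | l. l > 0 \<and> F (\<lambda>x. f x / l) \<le> 1}"

definition loc_conv_meas :: "'a measure \<Rightarrow> (nat \<Rightarrow> 'a \<Rightarrow> real) \<Rightarrow> ('a \<Rightarrow> real) \<Rightarrow> bool" where
  "loc_conv_meas M fs f \<longleftrightarrow> (\<forall>A\<in>sets M. emeasure M A < \<infinity> \<longrightarrow> (\<forall>\<epsilon>>0.
      ((\<lambda>n. emeasure M {x \<in> A. \<epsilon> < \<bar>fs n x - f x\<bar>}) \<longlonglongrightarrow> 0)))"

definition E_ext :: "'a measure \<Rightarrow> (('a \<Rightarrow> real) \<Rightarrow> ennreal) \<Rightarrow> ('a \<Rightarrow> real) \<Rightarrow> ennreal" where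
  "E_ext M E f = (if f \<in> L2 M then E f else \<infinity>)"

text \<open>Existence condition for E_e: E is lsc on D(E) w.r.t. local convergence in measure\<close>
definition Ee_exists :: "'a measure \<Rightarrow> (('a \<Rightarrow> real) \<Rightarrow> ennreal) \<Rightarrow> bool" where
  "Ee_exists M E \<longleftrightarrow> (\<forall>f fs. f \<in> L2 M \<and> E f < \<infinity> \<and> (\<forall>n. fs n \<in> L2 M \<and> E (fs n) < \<infinity>)
      \<and> loc_conv_meas M fs f \<longrightarrow> E f \<le> liminf (\<lambda>n. E (fs n)))"

text \<open>Lower semicontinuous relaxation on L^0 w.r.t. local convergence in measure
  (sequential lsc envelope; this topology is metrizable for sigma-finite mu)\<close>
definition E_e :: "'a measure \<Rightarrow> (('a \<Rightarrow> real) \<Rightarrow> ennreal) \<Rightarrow> ('a \<Rightarrow> real) \<Rightarrow> ennreal" where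
  "E_e M E f = (INF fs \<in> {fs. (\<forall>n. fs n \<in> borel_measurable M) \<and> loc_conv_meas M fs f}.
      liminf (\<lambda>n. E_ext M E (fs n)))"

end

theory Submission
  imports Defs
begin

lemma mx: "(a + b)/2 + \<bar>(a-b)/2\<bar> = max a (b::real)"
  by (simp add: max_def abs_real_def add_divide_distrib diff_divide_distrib)
lemma mn: "(a + b)/2 - \<bar>(a-b)/2\<bar> = min a (b::real)"
  by (simp add: min_def abs_real_def add_divide_distrib diff_divide_distrib)
lemma ennreal_double_le: "(a::ennreal) + a \<le> b + b \<Longrightarrow> a \<le> b"
  by (cases a rule: ennreal_cases; cases b rule: ennreal_cases)
     (auto simp: ennreal_plus[symmetric] top_unique simp del: ennreal_plus)


lemma two_abs_le: "2 * \<bar>a * b\<bar> \<le> a\<^sup>2 + (b::real)\<^sup>2"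
proof -
  have "0 \<le> (\<bar>a\<bar> - \<bar>b\<bar>)\<^sup>2" by simp
  then show ?thesis by (simp add: power2_eq_square algebra_simps abs_mult)
qed

lemma L2_meas: "f \<in> L2 M \<Longrightarrow> f \<in> borel_measurable M"
  by (simp add: L2_def)

lemma L2_sq: "f \<in> L2 M \<Longrightarrow> integrable M (\<lambda>x. (f x)\<^sup>2)"
  by (simp add: L2_def)

lemma L2_prod: assumes "f \<in> L2 M" "g \<in> L2 M" shows "integrable M (\<lambda>x. f x * g x)"
proof (rule Bochner_Integration.integrable_bound)
  show "integrable M (\<lambda>x. (f x)\<^sup>2 + (g x)\<^sup>2)" using assms by (auto simp: L2_def)
  show "(\<lambda>x. f x * g x) \<in> borel_measurable M" using assms by (auto simp: L2_def)
  show "AE x in M. norm (f x * g x) \<le> norm ((f x)\<^sup>2 + (g x)\<^sup>2)"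
  proof (intro AE_I2)
    fix x have "2 * \<bar>f x * g x\<bar> \<le> (f x)\<^sup>2 + (g x)\<^sup>2"
      by (rule two_abs_le)
    then show "norm (f x * g x) \<le> norm ((f x)\<^sup>2 + (g x)\<^sup>2)" by simp
  qed
qed

lemma L2_I: assumes "f \<in> borel_measurable M" "integrable M (\<lambda>x. (f x)\<^sup>2)" shows "f \<in> L2 M"
  using assms by (simp add: L2_def)

lemma L2_lin: assumes "f \<in> L2 M" "g \<in> L2 M" shows "(\<lambda>x. a * f x + b * g x) \<in> L2 M"
proof (rule L2_I)
  show "(\<lambda>x. a * f x + b * g x) \<in> borel_measurable M" using assms by (auto simp: L2_def)
  have "integrable M (\<lambda>x. a\<^sup>2 * (f x)\<^sup>2 + 2*a*b * (f x * g x) + b\<^sup>2 * (g x)\<^sup>2)"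
    using assms L2_prod[OF assms] by (auto simp: L2_def)
  then show "integrable M (\<lambda>x. (a * f x + b * g x)\<^sup>2)"
    by (simp add: power2_eq_square algebra_simps)
qed

lemma L2_zero: "(\<lambda>x. 0) \<in> L2 M" by (simp add: L2_def)

lemma L2_scale: "f \<in> L2 M \<Longrightarrow> (\<lambda>x. a * f x) \<in> L2 M"
  using L2_lin[of f M f a 0] by simp

lemma L2_div: "f \<in> L2 M \<Longrightarrow> (\<lambda>x. f x / a) \<in> L2 M"
  using L2_scale[of f M "1/a"] by simp

lemma L2_add: "f \<in> L2 M \<Longrightarrow> g \<in> L2 M \<Longrightarrow> (\<lambda>x. f x + g x) \<in> L2 M"
  using L2_lin[of f M g 1 1] by simp

lemma L2_diff: "f \<in> L2 M \<Longrightarrow> g \<in> L2 M \<Longrightarrow> (\<lambda>x. f x - g x) \<in> L2 M"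
  using L2_lin[of f M g 1 "-1"] by simp

lemma L2_abs: "f \<in> L2 M \<Longrightarrow> (\<lambda>x. \<bar>f x\<bar>) \<in> L2 M"
  by (auto simp: L2_def)

lemma L2_max: assumes "f \<in> L2 M" "g \<in> L2 M" shows "(\<lambda>x. max (f x) (g x)) \<in> L2 M"
proof -
  have "(\<lambda>x. (f x + g x)/2 + \<bar>(f x - g x)/2\<bar>) \<in> L2 M"
    using assms by (intro L2_add L2_abs L2_div L2_diff)
  moreover have "(\<lambda>x. (f x + g x)/2 + \<bar>(f x - g x)/2\<bar>) = (\<lambda>x. max (f x) (g x))"
    by (simp only: mx)
  ultimately show ?thesis by simp
qed

lemma L2_min: assumes "f \<in> L2 M" "g \<in> L2 M" shows "(\<lambda>x. min (f x) (g x)) \<in> L2 M"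
proof -
  have "(\<lambda>x. (f x + g x)/2 - \<bar>(f x - g x)/2\<bar>) \<in> L2 M"
    using assms by (intro L2_diff L2_abs L2_div L2_add)
  moreover have "(\<lambda>x. (f x + g x)/2 - \<bar>(f x - g x)/2\<bar>) = (\<lambda>x. min (f x) (g x))"
    by (simp only: mn)
  ultimately show ?thesis by simp
qed

lemma dist2sq_nonneg: "0 \<le> dist2sq M f g"
  by (simp add: dist2sq_def)

lemma dist2sq_int: "f \<in> L2 M \<Longrightarrow> g \<in> L2 M \<Longrightarrow> integrable M (\<lambda>x. (f x - g x)\<^sup>2)"
  using L2_diff L2_sq by blast

definition Phi :: "'a measure \<Rightarrow> (('a \<Rightarrow> real) \<Rightarrow> ennreal) \<Rightarrow> real \<Rightarrow> ('a \<Rightarrow> real) \<Rightarrow> ('a \<Rightarrow> real) \<Rightarrow> ennreal" where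
  "Phi M E c k v = E v + ennreal (c * dist2sq M v k)"

lemma is_resolvent_Phi: "is_resolvent M E \<alpha> f u \<longleftrightarrow> u \<in> L2 M \<and>
   (\<forall>g\<in>L2 M. Phi M E (\<alpha>/2) (\<lambda>x. f x / \<alpha>) u \<le> Phi M E (\<alpha>/2) (\<lambda>x. f x / \<alpha>) g)"
  by (simp add: is_resolvent_def Phi_def)

context
  fixes M :: "'a measure" and E :: "('a \<Rightarrow> real) \<Rightarrow> ennreal"
  assumes nopf: "nonlinear_order_preserving_form M E"
begin

lemma E_ae: "f \<in> L2 M \<Longrightarrow> g \<in> L2 M \<Longrightarrow> AE x in M. f x = g x \<Longrightarrow> E f = E g"
  using conjunct1[OF nopf[unfolded nonlinear_order_preserving_form_def]] by blast

lemma E_lsc: "f \<in> L2 M \<Longrightarrow> (\<And>n. fs n \<in> L2 M) \<Longrightarrow> (\<lambda>n. dist2sq M (fs n) f) \<longlonglongrightarrow> 0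
   \<Longrightarrow> E f \<le> liminf (\<lambda>n. E (fs n))"
  using conjunct1[OF conjunct2[OF nopf[unfolded nonlinear_order_preserving_form_def]]] by blast

lemma E_convex: "f \<in> L2 M \<Longrightarrow> g \<in> L2 M \<Longrightarrow> 0 < t \<Longrightarrow> t < 1 \<Longrightarrow>
   E (\<lambda>x. t * f x + (1 - t) * g x) \<le> ennreal t * E f + ennreal (1 - t) * E g"
  using conjunct1[OF conjunct2[OF conjunct2[OF nopf[unfolded nonlinear_order_preserving_form_def]]]] by blast

lemma E_sym: "f \<in> L2 M \<Longrightarrow> E (\<lambda>x. - f x) = E f"
  using conjunct1[OF conjunct2[OF conjunct2[OF conjunct2[OF nopf[unfolded nonlinear_order_preserving_form_def]]]]] by blast

lemma E_zero: "E (\<lambda>x. 0) = 0"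
  using conjunct1[OF conjunct2[OF conjunct2[OF conjunct2[OF conjunct2[OF nopf[unfolded nonlinear_order_preserving_form_def]]]]]] by blast

lemma E_contr: "f \<in> L2 M \<Longrightarrow> g \<in> L2 M \<Longrightarrow>
  E (\<lambda>x. f x + \<bar>g x\<bar>) + E (\<lambda>x. f x - \<bar>g x\<bar>) \<le> E (\<lambda>x. f x + g x) + E (\<lambda>x. f x - g x)"
  using conjunct2[OF conjunct2[OF conjunct2[OF conjunct2[OF conjunct2[OF nopf[unfolded nonlinear_order_preserving_form_def]]]]]] by blast

lemma E_abs: assumes "f \<in> L2 M" shows "E (\<lambda>x. \<bar>f x\<bar>) \<le> E f"
proof -
  have X: "E (\<lambda>x. 0 + \<bar>f x\<bar>) + E (\<lambda>x. 0 - \<bar>f x\<bar>) \<le> E (\<lambda>x. 0 + f x) + E (\<lambda>x. 0 - f x)"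
    using E_contr[OF L2_zero assms] .
  have e1: "(\<lambda>x. 0 + \<bar>f x\<bar>) = (\<lambda>x. \<bar>f x\<bar>)" by simp
  have e2: "(\<lambda>x. (0::real) - \<bar>f x\<bar>) = (\<lambda>x. - \<bar>f x\<bar>)" by simp
  have e3: "(\<lambda>x. 0 + f x) = f" by simp
  have e4: "(\<lambda>x. (0::real) - f x) = (\<lambda>x. - f x)" by simp
  have s1: "E (\<lambda>x. - \<bar>f x\<bar>) = E (\<lambda>x. \<bar>f x\<bar>)" using E_sym[OF L2_abs[OF assms]] .
  have s2: "E (\<lambda>x. - f x) = E f" using E_sym[OF assms] .
  have "E (\<lambda>x. \<bar>f x\<bar>) + E (\<lambda>x. \<bar>f x\<bar>) \<le> E f + E f"
    using X unfolding e1 e2 e3 e4 s1 s2 .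
  then show ?thesis by (rule ennreal_double_le)
qed

lemma E_minmax: assumes "f \<in> L2 M" "g \<in> L2 M"
  shows "E (\<lambda>x. max (f x) (g x)) + E (\<lambda>x. min (f x) (g x)) \<le> E f + E g"
proof -
  let ?a = "\<lambda>x. (f x + g x) / 2" and ?b = "\<lambda>x. (f x - g x) / 2"
  have X: "E (\<lambda>x. ?a x + \<bar>?b x\<bar>) + E (\<lambda>x. ?a x - \<bar>?b x\<bar>) \<le> E (\<lambda>x. ?a x + ?b x) + E (\<lambda>x. ?a x - ?b x)"
    using assms by (intro E_contr L2_div L2_add L2_diff)
  have eq1: "(\<lambda>x. ?a x + \<bar>?b x\<bar>) = (\<lambda>x. max (f x) (g x))"
    by (rule ext) (rule mx)
  have eq2: "(\<lambda>x. ?a x - \<bar>?b x\<bar>) = (\<lambda>x. min (f x) (g x))"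
    by (rule ext) (rule mn)
  have eq3: "(\<lambda>x. ?a x + ?b x) = f" by (rule ext) (simp add: field_simps)
  have eq4: "(\<lambda>x. ?a x - ?b x) = g" by (rule ext) (simp add: field_simps)
  show ?thesis using X unfolding eq1 eq2 eq3 eq4 .
qed

lemma E_scale: assumes "f \<in> L2 M" "0 \<le> t" "t \<le> 1"
  shows "E (\<lambda>x. t * f x) \<le> ennreal t * E f"
proof cases
  assume "t = 0" then show ?thesis using E_zero by simp
next
  assume t0: "t \<noteq> 0"
  show ?thesis
  proof cases
    assume "t = 1" then show ?thesis by simp
  next
    assume "t \<noteq> 1"
    with t0 assms have "E (\<lambda>x. t * f x + (1 - t) * 0) \<le> ennreal t * E f + ennreal (1 - t) * E (\<lambda>x. 0)"
      by (intro E_convex L2_zero) auto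
    then show ?thesis using E_zero by simp
  qed
qed

end


lemma mid_sq: "(1/2 * a + (1 - 1/2) * b - k)\<^sup>2 = 1/2*(a-k)\<^sup>2 + 1/2*(b-k)\<^sup>2 - 1/4*(a-b)\<^sup>2"
  for a b k :: real
  by (simp add: power2_eq_square field_simps)

lemma amgm_geom: fixes d :: real assumes "0 \<le> d" shows "d \<le> (1/2)^n + 2^n * d\<^sup>2"
proof (cases "d \<le> (1/2)^n")
  case True then show ?thesis by (simp add: zero_le_power2 add_increasing2)
next
  case False
  then have "(1/2)^n < d" by simp
  then have "2^n * (1/2)^n < 2^n * d" by simp
  then have "1 < 2^n * d" by (simp add: power_one_over)
  then have "d < (2^n * d) * d" using assms False
    by (metis less_le_not_le mult_less_cancel_right1 order_trans zero_le_divide_1_iff zero_le_power zero_le_numeral nat_le_linear)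
  then show ?thesis by (simp add: power2_eq_square mult.assoc add_increasing)
qed

lemma lin_aux: "(x::real) \<le> 1/2*a + 1/2*b \<Longrightarrow> y = 1/2*p + 1/2*q - r \<Longrightarrow> x + y \<le> 1/2*(a + p) + 1/2*(b+q) - r"
  unfolding ring_distribs by linarith

lemma ennreal_liminf_add: "liminf f + liminf g \<le> liminf (\<lambda>n. f n + (g n :: ennreal))"
proof -
  have inc: "incseq (\<lambda>n. INF m\<in>{n..}. h m)" for h :: "nat \<Rightarrow> ennreal"
    by (auto simp: incseq_def intro!: INF_superset_mono)
  have "liminf f + liminf g = (SUP n. (INF m\<in>{n..}. f m) + (INF m\<in>{n..}. g m))"
    unfolding liminf_SUP_INF by (rule ennreal_SUP_add[symmetric]) (rule inc)+
  also have "\<dots> \<le> (SUP n. INF m\<in>{n..}. f m + g m)"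
    by (intro SUP_mono) (auto intro!: INF_greatest add_mono INF_lower)
  finally show ?thesis unfolding liminf_SUP_INF .
qed

lemma ennreal_less_add_pos: "(m::ennreal) < \<infinity> \<Longrightarrow> 0 < e \<Longrightarrow> m < m + ennreal e"
  by (cases m rule: ennreal_cases) (auto simp: ennreal_plus[symmetric] ennreal_less_iff simp del: ennreal_plus)

lemma Phi_real: "E v < \<infinity> \<Longrightarrow> 0 \<le> c \<Longrightarrow> Phi M E c k v = ennreal (enn2real (E v) + c * dist2sq M v k)"
  by (simp add: Phi_def ennreal_plus dist2sq_nonneg)

lemma dist2sq_mid: assumes "a \<in> L2 M" "b \<in> L2 M" "k \<in> L2 M"
  shows "dist2sq M (\<lambda>x. 1/2 * a x + (1 - 1/2) * b x) k
       = 1/2 * dist2sq M a k + 1/2 * dist2sq M b k - 1/4 * dist2sq M a b"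
proof -
  have i1: "integrable M (\<lambda>x. (a x - k x)\<^sup>2)" "integrable M (\<lambda>x. (b x - k x)\<^sup>2)"
     "integrable M (\<lambda>x. (a x - b x)\<^sup>2)" using assms by (auto intro: dist2sq_int)
  have "dist2sq M (\<lambda>x. 1/2 * a x + (1 - 1/2) * b x) k
      = (\<integral>x. 1/2*(a x - k x)\<^sup>2 + 1/2*(b x - k x)\<^sup>2 - 1/4*(a x - b x)\<^sup>2 \<partial>M)"
    unfolding dist2sq_def by (simp only: mid_sq)
  also have "\<dots> = 1/2 * (\<integral>x. (a x - k x)\<^sup>2 \<partial>M) + 1/2 * (\<integral>x. (b x - k x)\<^sup>2 \<partial>M) - 1/4 * (\<integral>x. (a x - b x)\<^sup>2 \<partial>M)"
    using i1 by simp
  finally show ?thesis by (simp add: dist2sq_def)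
qed

context
  fixes M :: "'a measure" and E :: "('a \<Rightarrow> real) \<Rightarrow> ennreal"
  assumes nopf: "nonlinear_order_preserving_form M E"
begin

lemma mid_ineq:
  assumes "a \<in> L2 M" "b \<in> L2 M" "k \<in> L2 M" "E a < \<infinity>" "E b < \<infinity>" "0 \<le> c"
  defines "m \<equiv> (\<lambda>x. 1/2 * a x + (1 - 1/2) * b x)"
  shows "m \<in> L2 M" "E m < \<infinity>"
    "enn2real (E m) + c * dist2sq M m k \<le>
      1/2 * (enn2real (E a) + c * dist2sq M a k) + 1/2 * (enn2real (E b) + c * dist2sq M b k)
      - c/4 * dist2sq M a b"
proof -
  show mL: "m \<in> L2 M" unfolding m_def using assms by (intro L2_lin)
  have Em: "E m \<le> ennreal (1/2) * E a + ennreal (1 - 1/2) * E b" (is "_ \<le> ?X")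
    unfolding m_def using assms by (intro E_convex[OF nopf]) auto
  obtain ra where ra: "E a = ennreal ra" "0 \<le> ra" using assms(4) by (cases "E a" rule: ennreal_cases) auto
  obtain rb where rb: "E b = ennreal rb" "0 \<le> rb" using assms(5) by (cases "E b" rule: ennreal_cases) auto
  have m1: "ennreal (1/2) * ennreal ra = ennreal (1/2 * ra)" by (rule ennreal_mult[symmetric]) (auto simp: ra)
  have m2: "ennreal (1 - 1/2) * ennreal rb = ennreal ((1 - 1/2) * rb)" by (rule ennreal_mult[symmetric]) (auto simp: rb)
  have m3: "ennreal (1/2 * ra) + ennreal ((1 - 1/2) * rb) = ennreal (1/2 * ra + (1 - 1/2) * rb)"
    by (rule ennreal_plus[symmetric]) (auto simp: ra rb)
  have Em2: "E m \<le> ennreal (1/2 * ra + (1 - 1/2) * rb)" using Em unfolding ra(1) rb(1) m1 m2 m3 .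
  then show "E m < \<infinity>" using le_less_trans ennreal_less_top[of "1/2 * ra + (1 - 1/2) * rb"]
    unfolding infinity_ennreal_def by blast
  have "enn2real (E m) \<le> 1/2 * ra + (1 - 1/2) * rb" using Em2 by (intro enn2real_leI) (auto simp: ra rb)
  then have h1: "enn2real (E m) \<le> 1/2 * enn2real (E a) + 1/2 * enn2real (E b)" using ra rb by simp
  have h2: "dist2sq M m k = 1/2 * dist2sq M a k + 1/2 * dist2sq M b k - 1/4 * dist2sq M a b"
    unfolding m_def using assms by (intro dist2sq_mid)
  have h3: "c * dist2sq M m k = 1/2 * (c * dist2sq M a k) + 1/2 * (c * dist2sq M b k) - c/4 * dist2sq M a b"
    unfolding h2 by (simp add: algebra_simps)
  show "enn2real (E m) + c * dist2sq M m k \<le>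
      1/2 * (enn2real (E a) + c * dist2sq M a k) + 1/2 * (enn2real (E b) + c * dist2sq M b k)
      - c/4 * dist2sq M a b"
    by (rule lin_aux[OF h1 h3])
qed

lemma Phi_zero_fin: "k \<in> L2 M \<Longrightarrow> Phi M E c k (\<lambda>x. 0) < \<infinity>"
  by (simp add: Phi_def E_zero[OF nopf])

lemma min_exists:
  assumes k: "k \<in> L2 M" and c: "0 < c"
  shows "\<exists>u\<in>L2 M. \<forall>g\<in>L2 M. Phi M E c k u \<le> Phi M E c k g"
proof -
  let ?P = "Phi M E c k"
  have kmeas[measurable]: "k \<in> borel_measurable M" using k by (rule L2_meas)
  define m where "m = (INF v\<in>L2 M. ?P v)"
  have mle: "m \<le> ?P g" if "g \<in> L2 M" for g unfolding m_def using that by (rule INF_lower)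
  have mfin: "m < \<infinity>" using mle[OF L2_zero] Phi_zero_fin[OF k] by (rule le_less_trans)
  define e :: "nat \<Rightarrow> real" where "e n = (1/16)^n" for n
  have epos: "0 < e n" for n by (simp add: e_def)
  have edec: "e j \<le> e i" if "i \<le> j" for i j unfolding e_def using that by (intro power_decreasing) auto
  have "\<exists>v. v \<in> L2 M \<and> ?P v < m + ennreal (e n)" for n
  proof -
    have "m < m + ennreal (e n)" using mfin epos by (rule ennreal_less_add_pos)
    then show ?thesis unfolding m_def INF_less_iff by blast
  qed
  then obtain v where v: "\<And>n. v n \<in> L2 M" and vP: "\<And>n. ?P (v n) < m + ennreal (e n)"
    by metis
  have vmeas[measurable]: "\<And>n. v n \<in> borel_measurable M" using v by (rule L2_meas)
  have Evfin: "E (v n) < \<infinity>" for n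
  proof -
    have "E (v n) \<le> ?P (v n)" by (simp add: Phi_def)
    also have "\<dots> < m + ennreal (e n)" by (rule vP)
    also have "\<dots> \<le> \<infinity>" by simp
    finally show ?thesis .
  qed
  define mr where "mr = enn2real m"
  have m_eq: "m = ennreal mr" unfolding mr_def using mfin by simp
  have mr0: "0 \<le> mr" unfolding mr_def by simp
  define Pr where "Pr w = enn2real (E w) + c * dist2sq M w k" for w
  have Pr0: "0 \<le> Pr w" for w unfolding Pr_def using c by (simp add: dist2sq_nonneg)
  have Peq: "?P w = ennreal (Pr w)" if "E w < \<infinity>" for w
    unfolding Pr_def using that c by (intro Phi_real) auto
  have lower: "mr \<le> Pr w" if "w \<in> L2 M" "E w < \<infinity>" for w
    using mle[OF that(1)] Peq[OF that(2)] m_eq Pr0 by simp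
  have upper: "Pr (v n) < mr + e n" for n
  proof -
    have "ennreal (Pr (v n)) < ennreal (mr + e n)"
      using vP[of n] Peq[OF Evfin[of n]] m_eq mr0 epos[of n] by (simp add: ennreal_plus)
    then show ?thesis using Pr0 by (simp add: ennreal_less_iff)
  qed
  have pair: "dist2sq M (v i) (v j) \<le> 4 / c * e i" if "i \<le> j" for i j
  proof -
    from mid_ineq[OF v[of i] v[of j] k Evfin[of i] Evfin[of j], of c] c
    obtain mm where mm: "mm \<in> L2 M" "E mm < \<infinity>"
      "Pr mm \<le> 1/2 * Pr (v i) + 1/2 * Pr (v j) - c/4 * dist2sq M (v i) (v j)"
      unfolding Pr_def by auto
    have "mr \<le> Pr mm" using lower[OF mm(1,2)] .
    moreover have "Pr (v i) < mr + e i" "Pr (v j) < mr + e i"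
      using upper[of i] upper[of j] edec[OF that] by auto
    ultimately have "c/4 * dist2sq M (v i) (v j) < e i" using mm(3) by linarith
    then show ?thesis using c by (simp add: field_simps)
  qed
  define s where "s n x = 2^n * (v n x - v (Suc n) x)\<^sup>2" for n x
  have s0: "0 \<le> s n x" for n x by (simp add: s_def)
  have sint: "(\<integral>\<^sup>+x. ennreal (s n x) \<partial>M) \<le> ennreal (4 / c * (1/8)^n)" for n
  proof -
    have int: "integrable M (\<lambda>x. s n x)" unfolding s_def using v by (intro integrable_mult_right dist2sq_int)
    have eq1: "(\<integral>\<^sup>+x. ennreal (s n x) \<partial>M) = ennreal (\<integral>x. s n x \<partial>M)"
      using int by (intro nn_integral_eq_integral) (auto simp: s0)
    have "(\<integral>x. s n x \<partial>M) = 2^n * dist2sq M (v n) (v (Suc n))"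
      by (simp add: s_def dist2sq_def)
    also have "\<dots> \<le> 2^n * (4 / c * e n)" using pair[of n "Suc n"] by (intro mult_left_mono) simp_all
    also have "\<dots> = 4 / c * (1/8)^n"
    proof -
      have h: "(16::real)^n = 2^n * 8^n" by (simp flip: power_mult_distrib)
      show ?thesis unfolding e_def using c by (simp add: h power_divide field_simps)
    qed
    finally show ?thesis unfolding eq1 by (rule ennreal_leI)
  qed
  have "(\<integral>\<^sup>+x. (\<Sum>n. ennreal (s n x)) \<partial>M) = (\<Sum>n. \<integral>\<^sup>+x. ennreal (s n x) \<partial>M)"
    by (intro nn_integral_suminf) (auto simp: s_def)
  also have "\<dots> \<le> (\<Sum>n. ennreal (4 / c * (1/8)^n))"
    by (intro suminf_le sint) auto
  also have "\<dots> = ennreal (\<Sum>n. 4 / c * (1/8)^n)"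
    using c by (intro suminf_ennreal2) (auto intro!: summable_mult summable_geometric)
  also have "\<dots> < \<infinity>" by simp
  finally have "(\<integral>\<^sup>+x. (\<Sum>n. ennreal (s n x)) \<partial>M) \<noteq> \<infinity>" by simp
  then have "AE x in M. (\<Sum>n. ennreal (s n x)) \<noteq> \<infinity>"
    by (intro nn_integral_PInf_AE) (auto simp: s_def)
  then have conv: "AE x in M. convergent (\<lambda>n. v n x)"
  proof (rule AE_mp, intro AE_I2 impI)
    fix x assume fin: "(\<Sum>n. ennreal (s n x)) \<noteq> \<infinity>"
    have "summable (\<lambda>n. s n x)" using fin s0 by (intro summable_suminf_not_top) (auto simp: top_unique)
    then have "summable (\<lambda>n. (1/2)^n + s n x)" by (intro summable_add summable_geometric) auto
    then have "summable (\<lambda>n. v (Suc n) x - v n x)"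
    proof (rule summable_comparison_test')
      fix n :: nat
      have "\<bar>v (Suc n) x - v n x\<bar> \<le> (1/2)^n + 2^n * \<bar>v (Suc n) x - v n x\<bar>\<^sup>2"
        by (rule amgm_geom) simp
      also have "\<bar>v (Suc n) x - v n x\<bar>\<^sup>2 = (v n x - v (Suc n) x)\<^sup>2" by (simp add: power2_commute)
      finally show "norm (v (Suc n) x - v n x) \<le> (1/2)^n + s n x" by (simp add: s_def)
    qed
    then have "(\<lambda>n. \<Sum>i<n. v (Suc i) x - v i x) \<longlonglongrightarrow> (\<Sum>i. v (Suc i) x - v i x)"
      by (rule summable_LIMSEQ)
    then have "(\<lambda>n. v n x - v 0 x) \<longlonglongrightarrow> (\<Sum>i. v (Suc i) x - v i x)"
      by (simp add: sum_lessThan_telescope[of "\<lambda>i. v i x"])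
    then have "(\<lambda>n. (v n x - v 0 x) + v 0 x) \<longlonglongrightarrow> (\<Sum>i. v (Suc i) x - v i x) + v 0 x"
      by (intro tendsto_add tendsto_const)
    then show "convergent (\<lambda>n. v n x)" unfolding convergent_def by auto
  qed
  define V where "V x = lim (\<lambda>n. v n x)" for x
  have Vmeas[measurable]: "V \<in> borel_measurable M" unfolding V_def by measurable
  have Vlim: "AE x in M. (\<lambda>n. v n x) \<longlonglongrightarrow> V x"
    using conv by eventually_elim (simp add: V_def convergent_LIMSEQ_iff)
  have fatou_d: "(\<integral>\<^sup>+x. ennreal ((v n x - V x)\<^sup>2) \<partial>M) \<le> ennreal (4 / c * e n)" for n
  proof -
    have "(\<integral>\<^sup>+x. ennreal ((v n x - V x)\<^sup>2) \<partial>M) = (\<integral>\<^sup>+x. liminf (\<lambda>j. ennreal ((v n x - v j x)\<^sup>2)) \<partial>M)"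
    proof (rule nn_integral_cong_AE)
      show "AE x in M. ennreal ((v n x - V x)\<^sup>2) = liminf (\<lambda>j. ennreal ((v n x - v j x)\<^sup>2))"
        using Vlim
      proof eventually_elim
        case (elim x)
        have "(\<lambda>j. ennreal ((v n x - v j x)\<^sup>2)) \<longlonglongrightarrow> ennreal ((v n x - V x)\<^sup>2)"
          by (intro tendsto_ennrealI tendsto_intros elim)
        then show ?case by (rule lim_imp_Liminf[symmetric, rotated]) simp
      qed
    qed
    also have "\<dots> \<le> liminf (\<lambda>j. \<integral>\<^sup>+x. ennreal ((v n x - v j x)\<^sup>2) \<partial>M)"
      by (intro nn_integral_liminf) measurable
    also have "\<dots> \<le> liminf (\<lambda>j. ennreal (4 / c * e n))"
    proof (intro Liminf_mono eventually_sequentiallyI)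
      fix j assume "n \<le> j"
      have "(\<integral>\<^sup>+x. ennreal ((v n x - v j x)\<^sup>2) \<partial>M) = ennreal (dist2sq M (v n) (v j))"
        unfolding dist2sq_def using v by (intro nn_integral_eq_integral dist2sq_int) auto
      also have "\<dots> \<le> ennreal (4 / c * e n)" using pair[OF \<open>n \<le> j\<close>] by (intro ennreal_leI)
      finally show "(\<integral>\<^sup>+x. ennreal ((v n x - v j x)\<^sup>2) \<partial>M) \<le> ennreal (4 / c * e n)" .
    qed
    also have "\<dots> = ennreal (4 / c * e n)" by (simp add: Liminf_const)
    finally show ?thesis .
  qed
  have intd: "integrable M (\<lambda>x. (v n x - V x)\<^sup>2)" for n
    using fatou_d[of n] by (intro integrableI_nonneg) (auto simp: less_top[symmetric] top_unique)
  have dle: "dist2sq M (v n) V \<le> 4 / c * e n" for n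
  proof -
    have "ennreal (dist2sq M (v n) V) = (\<integral>\<^sup>+x. ennreal ((v n x - V x)\<^sup>2) \<partial>M)"
      unfolding dist2sq_def using intd[of n] by (intro nn_integral_eq_integral[symmetric]) auto
    also have "\<dots> \<le> ennreal (4 / c * e n)" by (rule fatou_d)
    finally show ?thesis using c epos[of n] by (simp add: ennreal_le_iff)
  qed
  have VL2: "V \<in> L2 M"
  proof -
    have "(\<lambda>x. v 0 x - V x) \<in> L2 M" using intd[of 0] by (intro L2_I) auto
    then have "(\<lambda>x. v 0 x - (v 0 x - V x)) \<in> L2 M" by (rule L2_diff[OF v[of 0]])
    then show ?thesis by simp
  qed
  have dlim: "(\<lambda>n. dist2sq M (v n) V) \<longlonglongrightarrow> 0"
  proof (rule tendsto_sandwich[of "\<lambda>_. 0" _ _ "\<lambda>n. 4 / c * e n"])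
    show "\<forall>\<^sub>F n in sequentially. 0 \<le> dist2sq M (v n) V" by (simp add: dist2sq_nonneg)
    show "\<forall>\<^sub>F n in sequentially. dist2sq M (v n) V \<le> 4 / c * e n" using dle by simp
    show "(\<lambda>n. 4 / c * e n) \<longlonglongrightarrow> 0" unfolding e_def
      by (intro tendsto_mult_right_zero LIMSEQ_power_zero) simp
  qed simp
  have EV: "E V \<le> liminf (\<lambda>n. E (v n))" using E_lsc[OF nopf VL2 v dlim] .
  have DV: "ennreal (c * dist2sq M V k) \<le> liminf (\<lambda>n. ennreal (c * dist2sq M (v n) k))"
  proof -
    have "ennreal (c * dist2sq M V k) = (\<integral>\<^sup>+x. ennreal (c * (V x - k x)\<^sup>2) \<partial>M)"
      unfolding dist2sq_def using VL2 k c
      by (subst nn_integral_eq_integral) (auto intro!: integrable_mult_right dist2sq_int)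
    also have "\<dots> = (\<integral>\<^sup>+x. liminf (\<lambda>n. ennreal (c * (v n x - k x)\<^sup>2)) \<partial>M)"
    proof (rule nn_integral_cong_AE)
      show "AE x in M. ennreal (c * (V x - k x)\<^sup>2) = liminf (\<lambda>n. ennreal (c * (v n x - k x)\<^sup>2))"
        using Vlim
      proof eventually_elim
        case (elim x)
        have "(\<lambda>n. ennreal (c * (v n x - k x)\<^sup>2)) \<longlonglongrightarrow> ennreal (c * (V x - k x)\<^sup>2)"
          by (intro tendsto_ennrealI tendsto_intros elim)
        then show ?case by (rule lim_imp_Liminf[symmetric, rotated]) simp
      qed
    qed
    also have "\<dots> \<le> liminf (\<lambda>n. \<integral>\<^sup>+x. ennreal (c * (v n x - k x)\<^sup>2) \<partial>M)"
      by (intro nn_integral_liminf) measurable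
    also have "\<dots> = liminf (\<lambda>n. ennreal (c * dist2sq M (v n) k))"
    proof -
      have "(\<integral>\<^sup>+x. ennreal (c * (v n x - k x)\<^sup>2) \<partial>M) = ennreal (c * dist2sq M (v n) k)" for n
        unfolding dist2sq_def using v k c
        by (subst nn_integral_eq_integral) (auto intro!: integrable_mult_right dist2sq_int)
      then show ?thesis by simp
    qed
    finally show ?thesis .
  qed
  have "?P V = E V + ennreal (c * dist2sq M V k)" by (simp add: Phi_def)
  also have "\<dots> \<le> liminf (\<lambda>n. E (v n)) + liminf (\<lambda>n. ennreal (c * dist2sq M (v n) k))"
    using EV DV by (rule add_mono)
  also have "\<dots> \<le> liminf (\<lambda>n. E (v n) + ennreal (c * dist2sq M (v n) k))"
    by (rule ennreal_liminf_add)
  also have "\<dots> \<le> liminf (\<lambda>n. m + ennreal (e n))"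
    using vP by (intro Liminf_mono) (auto simp: Phi_def less_imp_le)
  also have "\<dots> = m"
  proof -
    have "(\<lambda>n. m + ennreal (e n)) \<longlonglongrightarrow> m + ennreal 0"
      unfolding e_def by (intro tendsto_add tendsto_const tendsto_ennrealI LIMSEQ_power_zero) simp
    then have "liminf (\<lambda>n. m + ennreal (e n)) = m + ennreal 0" by (rule lim_imp_Liminf[rotated]) simp
    then show ?thesis by simp
  qed
  finally have "?P V \<le> m" .
  then show ?thesis using VL2 mle by (meson order_trans)
qed

lemma min_fin:
  assumes k: "k \<in> L2 M" and u: "u \<in> L2 M" "\<forall>g\<in>L2 M. Phi M E c k u \<le> Phi M E c k g"
  shows "E u < \<infinity>"
proof -
  have "E u \<le> Phi M E c k u" by (simp add: Phi_def)
  also have "\<dots> \<le> Phi M E c k (\<lambda>x. 0)" using u L2_zero by blast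
  also have "\<dots> < \<infinity>" by (rule Phi_zero_fin[OF k])
  finally show ?thesis .
qed

lemma min_replace:
  assumes k: "k \<in> L2 M" and c: "0 < c" and u: "u \<in> L2 M" "\<forall>g\<in>L2 M. Phi M E c k u \<le> Phi M E c k g"
    and w: "w \<in> L2 M" "Phi M E c k w \<le> Phi M E c k u"
  shows "AE x in M. u x = w x"
proof -
  let ?P = "Phi M E c k"
  have wmin: "\<forall>g\<in>L2 M. ?P w \<le> ?P g" using u w order_trans by blast
  have Eu: "E u < \<infinity>" by (rule min_fin[OF k u])
  have Ew: "E w < \<infinity>" by (rule min_fin[OF k w(1) wmin])
  define Pr where "Pr z = enn2real (E z) + c * dist2sq M z k" for z
  have Pr0: "0 \<le> Pr z" for z unfolding Pr_def using c by (simp add: dist2sq_nonneg)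
  have Peq: "?P z = ennreal (Pr z)" if "E z < \<infinity>" for z
    unfolding Pr_def using that c by (intro Phi_real) auto
  have "?P u \<le> ?P w" using u w by blast
  then have e1: "Pr u \<le> Pr w" using Peq[OF Eu] Peq[OF Ew] Pr0 by simp
  from mid_ineq[OF u(1) w(1) k Eu Ew, of c] c
  obtain mm where mm: "mm \<in> L2 M" "E mm < \<infinity>"
    "Pr mm \<le> 1/2 * Pr u + 1/2 * Pr w - c/4 * dist2sq M u w"
    unfolding Pr_def by auto
  have "?P u \<le> ?P mm" using u mm by blast
  then have "Pr u \<le> Pr mm" using Peq[OF Eu] Peq[OF mm(2)] Pr0 by simp
  moreover have "Pr w \<le> Pr u" using w(2) Peq[OF Eu] Peq[OF Ew] Pr0 by simp
  ultimately have "c/4 * dist2sq M u w \<le> 0" using mm(3) e1 by linarith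
  then have "dist2sq M u w \<le> 0" using c by (simp add: mult_le_0_iff)
  then have D0: "(\<integral>x. (u x - w x)\<^sup>2 \<partial>M) = 0" using dist2sq_nonneg[of M u w] unfolding dist2sq_def by linarith
  have "AE x in M. (u x - w x)\<^sup>2 = 0"
    using D0 dist2sq_int[OF u(1) w(1)] by (subst integral_nonneg_eq_0_iff_AE[symmetric]) auto
  then show ?thesis by eventually_elim simp
qed

lemma min_unique:
  assumes k: "k \<in> L2 M" and c: "0 < c" and u: "u \<in> L2 M" "\<forall>g\<in>L2 M. Phi M E c k u \<le> Phi M E c k g"
    and w: "w \<in> L2 M" "\<forall>g\<in>L2 M. Phi M E c k w \<le> Phi M E c k g"
  shows "AE x in M. u x = w x"
  using w u by (intro min_replace[OF k c u w(1)]) blast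

lemma min_swap:
  assumes k1: "k1 \<in> L2 M" and c1: "0 < c1" and u1: "u1 \<in> L2 M" "\<forall>g\<in>L2 M. Phi M E c1 k1 u1 \<le> Phi M E c1 k1 g"
    and k2: "k2 \<in> L2 M" and c2: "0 < c2" and u2: "u2 \<in> L2 M" "\<forall>g\<in>L2 M. Phi M E c2 k2 u2 \<le> Phi M E c2 k2 g"
    and pw: "AE x in M. c1 * (min (u1 x) (u2 x) - k1 x)\<^sup>2 + c2 * (max (u1 x) (u2 x) - k2 x)\<^sup>2
               \<le> c1 * (u1 x - k1 x)\<^sup>2 + c2 * (u2 x - k2 x)\<^sup>2"
  shows "AE x in M. u1 x \<le> u2 x"
proof -
  define a where "a x = min (u1 x) (u2 x)" for x
  define b where "b x = max (u1 x) (u2 x)" for x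
  have aL: "a \<in> L2 M" unfolding a_def using u1 u2 by (intro L2_min)
  have bL: "b \<in> L2 M" unfolding b_def using u1 u2 by (intro L2_max)
  have Eu1: "E u1 < \<infinity>" by (rule min_fin[OF k1 u1])
  have Eu2: "E u2 < \<infinity>" by (rule min_fin[OF k2 u2])
  have Emm: "E b + E a \<le> E u1 + E u2" unfolding a_def b_def using E_minmax[OF nopf u1(1) u2(1)] .
  have s12: "E u1 + E u2 < top" using Eu1 Eu2 by simp
  have "E b + E a < top" using Emm s12 by (rule le_less_trans)
  then have Ea: "E a < \<infinity>" and Eb: "E b < \<infinity>" by simp_all
  have Er: "enn2real (E b) + enn2real (E a) \<le> enn2real (E u1) + enn2real (E u2)"
  proof -
    have "enn2real (E b + E a) \<le> enn2real (E u1 + E u2)"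
      using Emm Eu1 Eu2 by (intro enn2real_mono) (auto simp: less_top)
    then show ?thesis using Ea Eb Eu1 Eu2 by (simp add: enn2real_plus less_top)
  qed
  have Dsum: "c1 * dist2sq M a k1 + c2 * dist2sq M b k2 \<le> c1 * dist2sq M u1 k1 + c2 * dist2sq M u2 k2"
  proof -
    have "c1 * dist2sq M a k1 + c2 * dist2sq M b k2 = (\<integral>x. c1 * (a x - k1 x)\<^sup>2 + c2 * (b x - k2 x)\<^sup>2 \<partial>M)"
    proof -
      have i1: "integrable M (\<lambda>x. c1 * (a x - k1 x)\<^sup>2)" using aL k1 by (intro integrable_mult_right dist2sq_int)
      have i2: "integrable M (\<lambda>x. c2 * (b x - k2 x)\<^sup>2)" using bL k2 by (intro integrable_mult_right dist2sq_int)
      show ?thesis unfolding dist2sq_def by (simp add: Bochner_Integration.integral_add[OF i1 i2])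
    qed
    also have "\<dots> \<le> (\<integral>x. c1 * (u1 x - k1 x)\<^sup>2 + c2 * (u2 x - k2 x)\<^sup>2 \<partial>M)"
      using aL bL k1 k2 u1 u2 pw unfolding a_def[symmetric] b_def[symmetric]
      by (intro integral_mono_AE) (auto intro!: Bochner_Integration.integrable_add integrable_mult_right dist2sq_int)
    also have "\<dots> = c1 * dist2sq M u1 k1 + c2 * dist2sq M u2 k2"
    proof -
      have i1: "integrable M (\<lambda>x. c1 * (u1 x - k1 x)\<^sup>2)" using u1 k1 by (intro integrable_mult_right dist2sq_int)
      have i2: "integrable M (\<lambda>x. c2 * (u2 x - k2 x)\<^sup>2)" using u2 k2 by (intro integrable_mult_right dist2sq_int)
      show ?thesis unfolding dist2sq_def by (simp add: Bochner_Integration.integral_add[OF i1 i2])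
    qed
    finally show ?thesis .
  qed
  have P1u: "Phi M E c1 k1 u1 = ennreal (enn2real (E u1) + c1 * dist2sq M u1 k1)"
    using Eu1 c1 by (intro Phi_real) auto
  have P1a: "Phi M E c1 k1 a = ennreal (enn2real (E a) + c1 * dist2sq M a k1)"
    using Ea c1 by (intro Phi_real) auto
  have P2u: "Phi M E c2 k2 u2 = ennreal (enn2real (E u2) + c2 * dist2sq M u2 k2)"
    using Eu2 c2 by (intro Phi_real) auto
  have P2b: "Phi M E c2 k2 b = ennreal (enn2real (E b) + c2 * dist2sq M b k2)"
    using Eb c2 by (intro Phi_real) auto
  have n1: "0 \<le> enn2real (E a) + c1 * dist2sq M a k1" "0 \<le> enn2real (E u1) + c1 * dist2sq M u1 k1"
    using c1 by (auto simp: dist2sq_nonneg)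
  have n2: "0 \<le> enn2real (E b) + c2 * dist2sq M b k2" "0 \<le> enn2real (E u2) + c2 * dist2sq M u2 k2"
    using c2 by (auto simp: dist2sq_nonneg)
  have "Phi M E c2 k2 u2 \<le> Phi M E c2 k2 b" using u2 bL by blast
  then have "enn2real (E u2) + c2 * dist2sq M u2 k2 \<le> enn2real (E b) + c2 * dist2sq M b k2"
    unfolding P2u P2b using n2 by simp
  then have "enn2real (E a) + c1 * dist2sq M a k1 \<le> enn2real (E u1) + c1 * dist2sq M u1 k1"
    using Er Dsum by linarith
  then have "Phi M E c1 k1 a \<le> Phi M E c1 k1 u1" unfolding P1u P1a by (rule ennreal_leI)
  from min_replace[OF k1 c1 u1 aL this]
  show ?thesis by eventually_elim (simp add: a_def)
qed

lemma pw_swap1: "k1 \<le> k2 \<Longrightarrow> 0 < c \<Longrightarrow>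
  c * (min x y - k1)\<^sup>2 + c * (max x y - k2)\<^sup>2 \<le> c * (x - k1)\<^sup>2 + c * (y - k2)\<^sup>2"
  for x y k1 k2 c :: real
proof (cases "x \<le> y")
  case True then show ?thesis by (simp add: min_def max_def)
next
  case False
  assume k: "k1 \<le> k2" and c: "0 < c"
  have "c * (x - k1)\<^sup>2 + c * (y - k2)\<^sup>2 - (c * (y - k1)\<^sup>2 + c * (x - k2)\<^sup>2) = 2 * c * ((x - y) * (k2 - k1))"
    by (simp add: power2_eq_square algebra_simps)
  also have "\<dots> \<ge> 0" using False k c by simp
  finally show ?thesis using False by (simp add: min_def max_def)
qed

lemma pw_swap2: "0 < b \<Longrightarrow> b \<le> a \<Longrightarrow> 0 \<le> y \<Longrightarrow>
  a/2 * (min x y - f/a)\<^sup>2 + b/2 * (max x y - f/b)\<^sup>2 \<le> a/2 * (x - f/a)\<^sup>2 + b/2 * (y - f/b)\<^sup>2"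
  for x y a b f :: real
proof (cases "x \<le> y")
  case True then show ?thesis by (simp add: min_def max_def)
next
  case False
  assume ab: "0 < b" "b \<le> a" "0 \<le> y"
  then have a0: "a \<noteq> 0" "b \<noteq> 0" by auto
  have "a/2 * (x - f/a)\<^sup>2 + b/2 * (y - f/b)\<^sup>2 - (a/2 * (y - f/a)\<^sup>2 + b/2 * (x - f/b)\<^sup>2) = (a - b)/2 * (x\<^sup>2 - y\<^sup>2)"
    using a0 by (simp add: power2_eq_square field_simps)
  also have "\<dots> \<ge> 0"
  proof -
    have "y\<^sup>2 \<le> x\<^sup>2" using False ab by (intro power_mono) auto
    then show ?thesis using ab by simp
  qed
  finally show ?thesis using False by (simp add: min_def max_def)
qed

lemma pw_abs: "0 \<le> k \<Longrightarrow> (\<bar>x\<bar> - k)\<^sup>2 \<le> (x - k)\<^sup>2" for x k :: real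
  by (cases "0 \<le> x") (auto simp: power2_eq_square algebra_simps intro!: mult_nonneg_nonpos)

lemma resolvent_is:
  assumes "0 < \<alpha>" "f \<in> L2 M"
  shows "is_resolvent M E \<alpha> f (resolvent M E \<alpha> f)"
proof -
  have "\<exists>u. is_resolvent M E \<alpha> f u"
    using min_exists[of "\<lambda>x. f x / \<alpha>" "\<alpha>/2"] assms unfolding is_resolvent_Phi
    by (auto intro: L2_div)
  then show ?thesis unfolding resolvent_def by (rule someI_ex)
qed

lemma res_L2: "0 < \<alpha> \<Longrightarrow> f \<in> L2 M \<Longrightarrow> resolvent M E \<alpha> f \<in> L2 M"
  using resolvent_is unfolding is_resolvent_Phi by blast

lemma res_min: "0 < \<alpha> \<Longrightarrow> f \<in> L2 M \<Longrightarrow> \<forall>g\<in>L2 M.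
   Phi M E (\<alpha>/2) (\<lambda>x. f x / \<alpha>) (resolvent M E \<alpha> f) \<le> Phi M E (\<alpha>/2) (\<lambda>x. f x / \<alpha>) g"
  using resolvent_is unfolding is_resolvent_Phi by blast

lemma res_fin: "0 < \<alpha> \<Longrightarrow> f \<in> L2 M \<Longrightarrow> E (resolvent M E \<alpha> f) < \<infinity>"
  by (rule min_fin[OF L2_div res_L2 res_min])

lemma res_pos:
  assumes a: "0 < \<alpha>" and f: "f \<in> L2 M" and fpos: "\<And>x. 0 \<le> f x"
  shows "AE x in M. 0 \<le> resolvent M E \<alpha> f x"
proof -
  let ?u = "resolvent M E \<alpha> f" and ?k = "\<lambda>x. f x / \<alpha>"
  have uL: "?u \<in> L2 M" using res_L2[OF a f] .
  have kL: "?k \<in> L2 M" using f by (rule L2_div)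
  have aL: "(\<lambda>x. \<bar>?u x\<bar>) \<in> L2 M" using uL by (rule L2_abs)
  have "Phi M E (\<alpha>/2) ?k (\<lambda>x. \<bar>?u x\<bar>) \<le> Phi M E (\<alpha>/2) ?k ?u"
    unfolding Phi_def
  proof (rule add_mono)
    show "E (\<lambda>x. \<bar>?u x\<bar>) \<le> E ?u" using E_abs[OF nopf uL] .
    have "dist2sq M (\<lambda>x. \<bar>?u x\<bar>) ?k \<le> dist2sq M ?u ?k"
      unfolding dist2sq_def using aL uL kL fpos a
      by (intro integral_mono dist2sq_int pw_abs) auto
    then show "ennreal (\<alpha>/2 * dist2sq M (\<lambda>x. \<bar>?u x\<bar>) ?k) \<le> ennreal (\<alpha>/2 * dist2sq M ?u ?k)"
      using a by (intro ennreal_leI mult_left_mono) auto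
  qed
  from min_replace[OF kL _ uL res_min[OF a f] aL this] a
  show ?thesis by (auto elim!: eventually_mono)
qed

lemma res_mono:
  assumes a: "0 < \<alpha>" and f: "f \<in> L2 M" "g \<in> L2 M" and fg: "\<And>x. f x \<le> g x"
  shows "AE x in M. resolvent M E \<alpha> f x \<le> resolvent M E \<alpha> g x"
proof (rule min_swap[OF L2_div[OF f(1)] _ res_L2[OF a f(1)] res_min[OF a f(1)]
                         L2_div[OF f(2)] _ res_L2[OF a f(2)] res_min[OF a f(2)]])
  show "0 < \<alpha>/2" using a by simp
  show "0 < \<alpha>/2" using a by simp
  show "AE x in M. \<alpha>/2 * (min (resolvent M E \<alpha> f x) (resolvent M E \<alpha> g x) - f x / \<alpha>)\<^sup>2 +
        \<alpha>/2 * (max (resolvent M E \<alpha> f x) (resolvent M E \<alpha> g x) - g x / \<alpha>)\<^sup>2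
        \<le> \<alpha>/2 * (resolvent M E \<alpha> f x - f x / \<alpha>)\<^sup>2 + \<alpha>/2 * (resolvent M E \<alpha> g x - g x / \<alpha>)\<^sup>2"
    using a fg by (intro AE_I2 pw_swap1) (auto simp: divide_right_mono)
qed

lemma res_mono_alpha:
  assumes b: "0 < \<beta>" "\<beta> \<le> \<alpha>" and f: "f \<in> L2 M" and fpos: "\<And>x. 0 \<le> f x"
  shows "AE x in M. resolvent M E \<alpha> f x \<le> resolvent M E \<beta> f x"
proof -
  have a: "0 < \<alpha>" using b by simp
  show ?thesis
  proof (rule min_swap[OF L2_div[OF f] _ res_L2[OF a f] res_min[OF a f]
                           L2_div[OF f] _ res_L2[OF b(1) f] res_min[OF b(1) f]])
    show "0 < \<alpha>/2" using a by simp
    show "0 < \<beta>/2" using b by simp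
    show "AE x in M. \<alpha>/2 * (min (resolvent M E \<alpha> f x) (resolvent M E \<beta> f x) - f x / \<alpha>)\<^sup>2 +
          \<beta>/2 * (max (resolvent M E \<alpha> f x) (resolvent M E \<beta> f x) - f x / \<beta>)\<^sup>2
          \<le> \<alpha>/2 * (resolvent M E \<alpha> f x - f x / \<alpha>)\<^sup>2 + \<beta>/2 * (resolvent M E \<beta> f x - f x / \<beta>)\<^sup>2"
      using res_pos[OF b(1) f fpos] by eventually_elim (intro pw_swap2 b)
  qed
qed

end


lemma lim0_aux:
  fixes X Y :: real
  assumes h: "\<And>t. 0 < t \<Longrightarrow> t < 1 \<Longrightarrow> 0 \<le> X + t * Y" and Y: "0 \<le> Y"
  shows "0 \<le> X"
proof (rule ccontr)
  assume "\<not> 0 \<le> X" then have X: "X < 0" by simp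
  define t where "t = min (1/2) (-X / (Y + 1))"
  have "0 < -X / (Y + 1)" using X Y by (intro divide_pos_pos) auto
  then have t0: "0 < t" by (simp add: t_def)
  have t1: "t < 1" by (simp add: t_def)
  have "t * Y \<le> (-X / (Y + 1)) * Y" using Y by (intro mult_right_mono) (auto simp: t_def)
  also have "\<dots> = -X * (Y / (Y + 1))" by simp
  also have "\<dots> < -X * 1" using X Y by (intro mult_strict_left_mono) auto
  finally have "X + t * Y < 0" by simp
  with h[OF t0 t1] show False by simp
qed

lemma pw_sq_exp: "a \<noteq> 0 \<Longrightarrow> a/2 * (u - f/a)\<^sup>2 = a/2 * u\<^sup>2 - u * f + a/2 * (f/a)\<^sup>2" for a u f :: real
  by (simp add: power2_eq_square field_simps)

lemma pw_amgm: "0 < a \<Longrightarrow> u * f \<le> a/4 * u\<^sup>2 + f\<^sup>2 / a" for a u f :: real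
proof -
  assume a: "0 < a"
  have "0 \<le> (a * u - 2 * f)\<^sup>2" by simp
  then have "0 \<le> (a\<^sup>2 * u\<^sup>2 - 4 * a * (u * f) + 4 * f\<^sup>2) / (4 * a)" using a
    by (intro divide_nonneg_pos) (auto simp: power2_eq_square algebra_simps)
  also have "\<dots> = a/4 * u\<^sup>2 + f\<^sup>2 / a - u * f" using a by (simp add: power2_eq_square field_simps)
  finally show ?thesis by simp
qed

context
  fixes M :: "'a measure" and E :: "('a \<Rightarrow> real) \<Rightarrow> ennreal"
  assumes nopf: "nonlinear_order_preserving_form M E"
begin

lemma res_bound:
  assumes a: "0 < \<alpha>" and f: "f \<in> L2 M"
  defines "u \<equiv> resolvent M E \<alpha> f"
  shows "enn2real (E u) + \<alpha>/2 * (\<integral>x. (u x)\<^sup>2 \<partial>M) \<le> (\<integral>x. u x * f x \<partial>M)"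
proof -
  have uL: "u \<in> L2 M" unfolding u_def using res_L2[OF nopf a f] .
  have kL: "(\<lambda>x. f x / \<alpha>) \<in> L2 M" using f by (rule L2_div)
  have Eu: "E u < \<infinity>" unfolding u_def using res_fin[OF nopf a f] .
  have "Phi M E (\<alpha>/2) (\<lambda>x. f x / \<alpha>) u \<le> Phi M E (\<alpha>/2) (\<lambda>x. f x / \<alpha>) (\<lambda>x. 0)"
    unfolding u_def using res_min[OF nopf a f] L2_zero by blast
  also have "\<dots> = ennreal (\<alpha>/2 * (\<integral>x. (f x / \<alpha>)\<^sup>2 \<partial>M))"
    by (simp add: Phi_def E_zero[OF nopf] dist2sq_def)
  finally have "ennreal (enn2real (E u) + \<alpha>/2 * dist2sq M u (\<lambda>x. f x / \<alpha>)) \<le> ennreal (\<alpha>/2 * (\<integral>x. (f x / \<alpha>)\<^sup>2 \<partial>M))"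
    using Phi_real[of E u "\<alpha>/2" M "\<lambda>x. f x / \<alpha>"] Eu a by simp
  then have ineq: "enn2real (E u) + \<alpha>/2 * dist2sq M u (\<lambda>x. f x / \<alpha>) \<le> \<alpha>/2 * (\<integral>x. (f x / \<alpha>)\<^sup>2 \<partial>M)"
    using a by (subst (asm) ennreal_le_iff) (auto intro!: integral_nonneg_AE)
  have i1: "integrable M (\<lambda>x. \<alpha>/2 * (u x)\<^sup>2)" using uL by (intro integrable_mult_right L2_sq)
  have i2: "integrable M (\<lambda>x. u x * f x)" using uL f by (rule L2_prod)
  have i3: "integrable M (\<lambda>x. \<alpha>/2 * (f x / \<alpha>)\<^sup>2)" using kL by (intro integrable_mult_right L2_sq)
  have "\<alpha>/2 * dist2sq M u (\<lambda>x. f x / \<alpha>) = (\<integral>x. \<alpha>/2 * (u x - f x / \<alpha>)\<^sup>2 \<partial>M)"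
    by (simp add: dist2sq_def)
  also have "\<dots> = (\<integral>x. \<alpha>/2 * (u x)\<^sup>2 - u x * f x + \<alpha>/2 * (f x / \<alpha>)\<^sup>2 \<partial>M)"
    using a by (simp only: pw_sq_exp)
  also have "\<dots> = \<alpha>/2 * (\<integral>x. (u x)\<^sup>2 \<partial>M) - (\<integral>x. u x * f x \<partial>M) + \<alpha>/2 * (\<integral>x. (f x / \<alpha>)\<^sup>2 \<partial>M)"
    using i1 i2 i3 by simp
  finally show ?thesis using ineq by linarith
qed

lemma res_L2bound:
  assumes a: "0 < \<alpha>" and f: "f \<in> L2 M"
  defines "u \<equiv> resolvent M E \<alpha> f"
  shows "(\<integral>x. (\<alpha> * u x)\<^sup>2 \<partial>M) \<le> 4 * (\<integral>x. (f x)\<^sup>2 \<partial>M)"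
proof -
  have uL: "u \<in> L2 M" unfolding u_def using res_L2[OF nopf a f] .
  have b: "enn2real (E u) + \<alpha>/2 * (\<integral>x. (u x)\<^sup>2 \<partial>M) \<le> (\<integral>x. u x * f x \<partial>M)"
    unfolding u_def by (rule res_bound[OF a f])
  have "(\<integral>x. u x * f x \<partial>M) \<le> (\<integral>x. \<alpha>/4 * (u x)\<^sup>2 + (f x)\<^sup>2 / \<alpha> \<partial>M)"
    using uL f a by (intro integral_mono L2_prod pw_amgm) (auto intro!: Bochner_Integration.integrable_add integrable_mult_right L2_sq)
  also have "\<dots> = \<alpha>/4 * (\<integral>x. (u x)\<^sup>2 \<partial>M) + (\<integral>x. (f x)\<^sup>2 \<partial>M) / \<alpha>"
    using uL f by (simp add: L2_sq)
  finally have "(\<integral>x. u x * f x \<partial>M) \<le> \<alpha>/4 * (\<integral>x. (u x)\<^sup>2 \<partial>M) + (\<integral>x. (f x)\<^sup>2 \<partial>M) / \<alpha>" .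
  then have "\<alpha>/4 * (\<integral>x. (u x)\<^sup>2 \<partial>M) \<le> (\<integral>x. (f x)\<^sup>2 \<partial>M) / \<alpha>"
    using b enn2real_nonneg[of "E u"] by linarith
  then have "\<alpha> * (\<alpha>/4 * (\<integral>x. (u x)\<^sup>2 \<partial>M)) \<le> \<alpha> * ((\<integral>x. (f x)\<^sup>2 \<partial>M) / \<alpha>)"
    using a by (intro mult_left_mono) auto
  then have "\<alpha>\<^sup>2 * (\<integral>x. (u x)\<^sup>2 \<partial>M) \<le> 4 * (\<integral>x. (f x)\<^sup>2 \<partial>M)"
    using a by (simp add: power2_eq_square field_simps)
  then show ?thesis by (simp add: power_mult_distrib)
qed

lemma E_convex_real:
  assumes "f \<in> L2 M" "g \<in> L2 M" "E f < \<infinity>" "E g < \<infinity>" "0 < t" "t < 1"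
  shows "E (\<lambda>x. t * f x + (1 - t) * g x) < \<infinity>"
    "enn2real (E (\<lambda>x. t * f x + (1 - t) * g x)) \<le> t * enn2real (E f) + (1 - t) * enn2real (E g)"
proof -
  have Em: "E (\<lambda>x. t * f x + (1 - t) * g x) \<le> ennreal t * E f + ennreal (1 - t) * E g"
    using assms by (intro E_convex[OF nopf]) auto
  obtain ra where ra: "E f = ennreal ra" "0 \<le> ra" using assms(3) by (cases "E f" rule: ennreal_cases) auto
  obtain rb where rb: "E g = ennreal rb" "0 \<le> rb" using assms(4) by (cases "E g" rule: ennreal_cases) auto
  have m1: "ennreal t * ennreal ra = ennreal (t * ra)" using assms by (intro ennreal_mult[symmetric]) (auto simp: ra)
  have m2: "ennreal (1 - t) * ennreal rb = ennreal ((1 - t) * rb)" using assms by (intro ennreal_mult[symmetric]) (auto simp: rb)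
  have m3: "ennreal (t * ra) + ennreal ((1 - t) * rb) = ennreal (t * ra + (1 - t) * rb)"
    using assms by (intro ennreal_plus[symmetric]) (auto simp: ra rb)
  have Em2: "E (\<lambda>x. t * f x + (1 - t) * g x) \<le> ennreal (t * ra + (1 - t) * rb)" using Em unfolding ra(1) rb(1) m1 m2 m3 .
  then show "E (\<lambda>x. t * f x + (1 - t) * g x) < \<infinity>" using le_less_trans ennreal_less_top[of "t * ra + (1 - t) * rb"]
    unfolding infinity_ennreal_def by blast
  have "enn2real (E (\<lambda>x. t * f x + (1 - t) * g x)) \<le> t * ra + (1 - t) * rb"
    using Em2 assms by (intro enn2real_leI) (auto simp: ra rb)
  then show "enn2real (E (\<lambda>x. t * f x + (1 - t) * g x)) \<le> t * enn2real (E f) + (1 - t) * enn2real (E g)"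
    using ra rb by simp
qed

lemma res_var:
  assumes a: "0 < \<alpha>" and f: "f \<in> L2 M" and phi: "\<phi> \<in> L2 M" "E \<phi> < \<infinity>"
  defines "u \<equiv> resolvent M E \<alpha> f"
  shows "(\<integral>x. (f x - \<alpha> * u x) * (\<phi> x - u x) \<partial>M) \<le> enn2real (E \<phi>) - enn2real (E u)"
proof -
  define c where "c = \<alpha>/2"
  define k where "k x = f x / \<alpha>" for x
  have c0: "0 < c" using a by (simp add: c_def)
  have uL: "u \<in> L2 M" unfolding u_def using res_L2[OF nopf a f] .
  have kL: "k \<in> L2 M" unfolding k_def using f by (rule L2_div)
  have Eu: "E u < \<infinity>" unfolding u_def using res_fin[OF nopf a f] .
  have umin: "\<forall>g\<in>L2 M. Phi M E c k u \<le> Phi M E c k g"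
    unfolding u_def c_def k_def[abs_def] using res_min[OF nopf a f] .
  define I1 where "I1 = (\<integral>x. (u x - k x)\<^sup>2 \<partial>M)"
  define I2 where "I2 = (\<integral>x. (u x - k x) * (\<phi> x - u x) \<partial>M)"
  define I3 where "I3 = (\<integral>x. (\<phi> x - u x)\<^sup>2 \<partial>M)"
  have I3nn: "0 \<le> I3" unfolding I3_def by simp
  have iu: "integrable M (\<lambda>x. (u x - k x)\<^sup>2)" using uL kL by (rule dist2sq_int)
  have ip: "integrable M (\<lambda>x. (u x - k x) * (\<phi> x - u x))" using uL kL phi by (intro L2_prod L2_diff)
  have iq: "integrable M (\<lambda>x. (\<phi> x - u x)\<^sup>2)" using uL phi by (intro dist2sq_int)
  have main: "0 \<le> (enn2real (E \<phi>) - enn2real (E u) + 2 * c * I2) + t * (c * I3)" if t: "0 < t" "t < 1" for t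
  proof -
    define v where "v x = t * \<phi> x + (1 - t) * u x" for x
    have vL: "v \<in> L2 M" unfolding v_def using phi uL by (intro L2_lin)
    have Ev: "E v < \<infinity>" "enn2real (E v) \<le> t * enn2real (E \<phi>) + (1 - t) * enn2real (E u)"
      unfolding v_def[abs_def] using E_convex_real[OF phi(1) uL phi(2) Eu t] by auto
    have Dv: "dist2sq M v k = I1 + 2 * t * I2 + t\<^sup>2 * I3"
    proof -
      have "dist2sq M v k = (\<integral>x. (u x - k x)\<^sup>2 + 2 * t * ((u x - k x) * (\<phi> x - u x)) + t\<^sup>2 * (\<phi> x - u x)\<^sup>2 \<partial>M)"
        unfolding dist2sq_def v_def by (rule Bochner_Integration.integral_cong) (simp_all add: power2_eq_square algebra_simps)
      also have "\<dots> = I1 + 2 * t * I2 + t\<^sup>2 * I3"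
        using iu ip iq unfolding I1_def I2_def I3_def by simp
      finally show ?thesis .
    qed
    have p1: "Phi M E c k u = ennreal (enn2real (E u) + c * dist2sq M u k)"
      by (rule Phi_real) (use Eu c0 in auto)
    have p2: "Phi M E c k v = ennreal (enn2real (E v) + c * dist2sq M v k)"
      by (rule Phi_real) (use Ev c0 in auto)
    have Ynn: "0 \<le> enn2real (E v) + c * dist2sq M v k" using c0 by (simp add: dist2sq_nonneg)
    have "Phi M E c k u \<le> Phi M E c k v" using umin vL by blast
    then have "ennreal (enn2real (E u) + c * dist2sq M u k) \<le> ennreal (enn2real (E v) + c * dist2sq M v k)"
      unfolding p1 p2 .
    then have "enn2real (E u) + c * dist2sq M u k \<le> enn2real (E v) + c * dist2sq M v k"
      using ennreal_le_iff[OF Ynn] by blast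
    moreover have Du: "dist2sq M u k = I1" by (simp add: I1_def dist2sq_def)
    ultimately have "enn2real (E u) + c * I1 \<le> enn2real (E v) + c * (I1 + 2 * t * I2 + t\<^sup>2 * I3)"
      unfolding Dv by simp
    then have "enn2real (E u) + c * I1 \<le> t * enn2real (E \<phi>) + (1 - t) * enn2real (E u) + c * (I1 + 2 * t * I2 + t\<^sup>2 * I3)"
      using Ev(2) by linarith
    then have "0 \<le> t * ((enn2real (E \<phi>) - enn2real (E u) + 2 * c * I2) + t * (c * I3))"
      by (simp add: power2_eq_square algebra_simps)
    then show ?thesis using t by (simp add: zero_le_mult_iff)
  qed
  have "0 \<le> enn2real (E \<phi>) - enn2real (E u) + 2 * c * I2"
    by (rule lim0_aux[OF main]) (use c0 I3nn in auto)
  moreover have "(\<integral>x. (f x - \<alpha> * u x) * (\<phi> x - u x) \<partial>M) = - (2 * c * I2)"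
  proof -
    have "(\<integral>x. (f x - \<alpha> * u x) * (\<phi> x - u x) \<partial>M) = (\<integral>x. - (2 * c) * ((u x - k x) * (\<phi> x - u x)) \<partial>M)"
      using a by (intro Bochner_Integration.integral_cong) (auto simp: c_def k_def field_simps)
    also have "\<dots> = - (2 * c * I2)" unfolding I2_def by simp
    finally show ?thesis .
  qed
  ultimately show ?thesis by linarith
qed

end


lemma exhaustion_props:
  assumes sf: "sigma_finite_measure M"
  shows "range (exhaustion M) \<subseteq> sets M" "\<Union>(range (exhaustion M)) = space M"
    "\<And>i. emeasure M (exhaustion M i) \<noteq> \<infinity>" "incseq (exhaustion M)"
proof -
  obtain A :: "nat \<Rightarrow> 'a set" where A: "range A \<subseteq> sets M" "(\<Union>i. A i) = space M"
    "\<And>i. emeasure M (A i) \<noteq> \<infinity>" "incseq A"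
    using sigma_finite_measure.sigma_finite_incseq[OF sf] by metis
  have "range (exhaustion M) \<subseteq> sets M \<and> \<Union>(range (exhaustion M)) = space M \<and>
      (\<forall>i. emeasure M (exhaustion M i) \<noteq> \<infinity>) \<and> incseq (exhaustion M)"
    unfolding exhaustion_def by (rule someI[of _ A]) (use A in auto)
  then show "range (exhaustion M) \<subseteq> sets M" "\<Union>(range (exhaustion M)) = space M"
    "\<And>i. emeasure M (exhaustion M i) \<noteq> \<infinity>" "incseq (exhaustion M)" by auto
qed

lemma exh_sets: "sigma_finite_measure M \<Longrightarrow> exhaustion M i \<in> sets M"
  using exhaustion_props(1) by blast

lemma approx_meas[measurable]:
  assumes sf: "sigma_finite_measure M" and g[measurable]: "g \<in> borel_measurable M"
  shows "approx M g n \<in> borel_measurable M"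
proof -
  have [measurable]: "exhaustion M n \<in> sets M" using exh_sets[OF sf] .
  show ?thesis unfolding approx_def by measurable
qed

lemma approx_nonneg: "0 \<le> approx M g n x"
  by (simp add: approx_def)

lemma approx_le_n: "approx M g n x \<le> real n"
proof -
  have "enn2real (min (g x) (of_nat n)) \<le> real n"
    by (rule enn2real_leI) (auto simp: min.coboundedI2 ennreal_of_nat_eq_real_of_nat)
  then show ?thesis by (auto simp: approx_def indicator_def)
qed

lemma approx_outside: "sigma_finite_measure M \<Longrightarrow> x \<notin> space M \<Longrightarrow> approx M g n x = 0"
  using exhaustion_props(2)[of M] by (auto simp: approx_def indicator_def)

lemma approx_L2:
  assumes sf: "sigma_finite_measure M" and g[measurable]: "g \<in> borel_measurable M"
  shows "approx M g n \<in> L2 M"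
proof (rule L2_I)
  have A[measurable]: "exhaustion M n \<in> sets M" using exh_sets[OF sf] .
  show m: "approx M g n \<in> borel_measurable M" using approx_meas[OF sf g] .
  show "integrable M (\<lambda>x. (approx M g n x)\<^sup>2)"
  proof (rule Bochner_Integration.integrable_bound)
    show "integrable M (\<lambda>x. (real n)\<^sup>2 * indicator (exhaustion M n) x)"
      using exhaustion_props(3)[OF sf, of n] by (intro integrable_mult_right integrable_real_indicator A)
        (simp add: less_top)
    show "(\<lambda>x. (approx M g n x)\<^sup>2) \<in> borel_measurable M" using m by measurable
    show "AE x in M. norm ((approx M g n x)\<^sup>2) \<le> norm ((real n)\<^sup>2 * indicator (exhaustion M n) x)"
    proof (intro AE_I2)
      fix x
      show "norm ((approx M g n x)\<^sup>2) \<le> norm ((real n)\<^sup>2 * indicator (exhaustion M n) x)"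
      proof (cases "x \<in> exhaustion M n")
        case True
        have "(approx M g n x)\<^sup>2 \<le> (real n)\<^sup>2" using approx_le_n[of M g n x] approx_nonneg[of M g n x]
          by (intro power_mono) auto
        then show ?thesis using True by simp
      next
        case False then show ?thesis by (simp add: approx_def)
      qed
    qed
  qed
qed

lemma approx_mono_g:
  assumes sf: "sigma_finite_measure M" and le: "\<And>x. x \<in> space M \<Longrightarrow> g x \<le> g' x"
  shows "approx M g n x \<le> approx M g' n x"
proof (cases "x \<in> exhaustion M n")
  case True
  then have "x \<in> space M" using exhaustion_props(2)[OF sf] by blast
  then have m1: "min (g x) (of_nat n) \<le> min (g' x) (of_nat n)" by (intro min.mono le order_refl)
  have m2: "min (g' x) (of_nat n) < top"
    by (rule le_less_trans[OF min.cobounded2]) (simp add: ennreal_of_nat_eq_real_of_nat)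
  have "enn2real (min (g x) (of_nat n)) \<le> enn2real (min (g' x) (of_nat n))"
    using m1 m2 by (rule enn2real_mono)
  then show ?thesis using True by (simp add: approx_def)
next
  case False then show ?thesis by (simp add: approx_def)
qed

lemma approx_mono_n:
  assumes sf: "sigma_finite_measure M"
  shows "approx M g n x \<le> approx M g (Suc n) x"
proof -
  have sub: "exhaustion M n \<subseteq> exhaustion M (Suc n)" using exhaustion_props(4)[OF sf] by (simp add: incseq_Suc_iff)
  have m1: "min (g x) (of_nat n) \<le> min (g x) (of_nat (Suc n))" by (intro min.mono) auto
  have m2: "min (g x) (of_nat (Suc n)) < top"
    by (rule le_less_trans[OF min.cobounded2]) (simp add: ennreal_of_nat_eq_real_of_nat)
  have "enn2real (min (g x) (of_nat n)) \<le> enn2real (min (g x) (of_nat (Suc n)))"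
    using m1 m2 by (rule enn2real_mono)
  then show ?thesis using sub by (auto simp: approx_def indicator_def)
qed

lemma approx_le:
  assumes "0 \<le> h x"
  shows "approx M (\<lambda>x. ennreal (h x)) n x \<le> h x"
proof -
  have "enn2real (min (ennreal (h x)) (of_nat n)) \<le> h x"
    using assms by (intro enn2real_leI) auto
  then show ?thesis using assms by (auto simp: approx_def indicator_def)
qed

lemma approx_lim:
  assumes sf: "sigma_finite_measure M" and x: "x \<in> space M" and h: "0 \<le> h x"
  shows "(\<lambda>n. approx M (\<lambda>x. ennreal (h x)) n x) \<longlonglongrightarrow> h x"
proof -
  obtain i where i: "x \<in> exhaustion M i" using exhaustion_props(2)[OF sf] x by blast
  obtain j :: nat where j: "h x \<le> real j" using real_arch_simple by blast
  have "eventually (\<lambda>n. approx M (\<lambda>x. ennreal (h x)) n x = h x) sequentially"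
  proof (rule eventually_sequentiallyI[of "max i j"])
    fix n assume n: "max i j \<le> n"
    then have "x \<in> exhaustion M n" using exhaustion_props(4)[OF sf] i by (auto simp: incseq_def)
    moreover have "min (ennreal (h x)) (of_nat n) = ennreal (h x)"
    proof -
      have "h x \<le> real n" using j n by linarith
      then have "ennreal (h x) \<le> of_nat n" by (metis ennreal_leI ennreal_of_nat_eq_real_of_nat)
      then show ?thesis by (simp add: min_def)
    qed
    ultimately show "approx M (\<lambda>x. ennreal (h x)) n x = h x" using h by (simp add: approx_def)
  qed
  then show ?thesis by (rule tendsto_eventually)
qed

context
  fixes M :: "'a measure" and E :: "('a \<Rightarrow> real) \<Rightarrow> ennreal"
  assumes sf: "sigma_finite_measure M" and nopf: "nonlinear_order_preserving_form M E"
begin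

lemma alpha_pos: "0 < 1 / real (Suc m)" by simp

lemma resa_L2: "g \<in> borel_measurable M \<Longrightarrow> resolvent M E (1 / real (Suc m)) (approx M g n) \<in> L2 M"
  by (rule res_L2[OF nopf alpha_pos approx_L2[OF sf]])

lemma resa_meas[measurable]: "g \<in> borel_measurable M \<Longrightarrow> resolvent M E (1 / real (Suc m)) (approx M g n) \<in> borel_measurable M"
  by (rule L2_meas[OF resa_L2])

lemma green_meas[measurable]:
  assumes g[measurable]: "g \<in> borel_measurable M"
  shows "green M E g \<in> borel_measurable M"
  unfolding green_def resolvent_ext_def using resa_meas[OF g] by measurable

lemma green_eq: "green M E g x = (SUP m. SUP n. ennreal (resolvent M E (1 / real (Suc m)) (approx M g n) x))"
  by (simp add: green_def resolvent_ext_def)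

lemma green_mono:
  assumes g[measurable]: "g \<in> borel_measurable M" and g'[measurable]: "g' \<in> borel_measurable M"
    and le: "\<And>x. x \<in> space M \<Longrightarrow> g x \<le> g' x"
  shows "AE x in M. green M E g x \<le> green M E g' x"
proof -
  have "AE x in M. \<forall>m n. resolvent M E (1 / real (Suc m)) (approx M g n) x \<le> resolvent M E (1 / real (Suc m)) (approx M g' n) x"
    unfolding AE_all_countable
    by (intro allI res_mono[OF nopf alpha_pos approx_L2[OF sf g] approx_L2[OF sf g'] approx_mono_g[OF sf le]])
  then show ?thesis unfolding green_eq
    by eventually_elim (intro SUP_mono' ennreal_leI, blast)
qed

end


lemma enn_mult_abs_le: "0 \<le> w \<Longrightarrow> ennreal u * ennreal w \<le> ennreal (\<bar>u\<bar> * w)"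
  by (cases "0 \<le> u") (auto simp: ennreal_mult[symmetric] ennreal_neg)

context
  fixes M :: "'a measure" and E :: "('a \<Rightarrow> real) \<Rightarrow> ennreal"
  assumes sf: "sigma_finite_measure M" and nopf: "nonlinear_order_preserving_form M E"
begin

lemma modular_of_fin:
  assumes uL: "u \<in> L2 M" and Eu: "E u < \<infinity>"
  shows "u \<in> modular_space E (L2 M)"
  unfolding modular_space_def
proof (intro CollectI conjI uL)
  show "((\<lambda>l. E (\<lambda>x. l * u x)) \<longlongrightarrow> 0) (at_right 0)"
  proof (rule tendsto_sandwich[of "\<lambda>_. 0" _ _ "\<lambda>l. ennreal (l * enn2real (E u))"])
    show "\<forall>\<^sub>F l in at_right 0. 0 \<le> E (\<lambda>x. l * u x)" by simp
    show "\<forall>\<^sub>F l in at_right (0::real). E (\<lambda>x. l * u x) \<le> ennreal (l * enn2real (E u))"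
      unfolding eventually_at_right_field
    proof (intro exI[of _ 1] conjI allI impI)
      fix l :: real assume l: "0 < l" "l < 1"
      have "E (\<lambda>x. l * u x) \<le> ennreal l * E u" using l by (intro E_scale[OF nopf uL]) auto
      also have "\<dots> = ennreal (l * enn2real (E u))" using Eu l by (simp add: ennreal_mult)
      finally show "E (\<lambda>x. l * u x) \<le> ennreal (l * enn2real (E u))" .
    qed simp
    have "((\<lambda>l. l * enn2real (E u)) \<longlongrightarrow> 0 * enn2real (E u)) (at_right 0)"
      by (intro tendsto_intros)
    then show "((\<lambda>l. ennreal (l * enn2real (E u))) \<longlongrightarrow> 0) (at_right 0)"
      using tendsto_ennrealI by fastforce
  qed simp
qed

lemma key21:
  assumes a: "0 < \<alpha>" and hL: "h \<in> L2 M" and hle: "\<And>x. x \<in> space M \<Longrightarrow> 0 \<le> h x \<and> h x \<le> w x / 2"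
    and wm[measurable]: "w \<in> borel_measurable M" and w0: "\<And>x. x \<in> space M \<Longrightarrow> 0 \<le> w x"
    and H: "\<forall>f\<in>modular_space E (L2 M). (\<integral>\<^sup>+x. ennreal (\<bar>f x\<bar> * w x) \<partial>M) \<le> lux_norm E f"
  shows "(\<integral>\<^sup>+x. ennreal (resolvent M E \<alpha> h x) * ennreal (w x) \<partial>M) \<le> 1"
proof -
  define u where "u = resolvent M E \<alpha> h"
  have uL: "u \<in> L2 M" unfolding u_def using res_L2[OF nopf a hL] .
  have um[measurable]: "u \<in> borel_measurable M" using uL by (rule L2_meas)
  have Eu: "E u < \<infinity>" unfolding u_def using res_fin[OF nopf a hL] .
  have B: "enn2real (E u) + \<alpha>/2 * (\<integral>x. (u x)\<^sup>2 \<partial>M) \<le> (\<integral>x. u x * h x \<partial>M)"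
    unfolding u_def using res_bound[OF nopf a hL] .
  have Bu: "enn2real (E u) \<le> (\<integral>x. u x * h x \<partial>M)"
  proof -
    have "0 \<le> (\<integral>x. (u x)\<^sup>2 \<partial>M)" by (intro integral_nonneg_AE) simp
    then have "0 \<le> \<alpha>/2 * (\<integral>x. (u x)\<^sup>2 \<partial>M)" using a by simp
    then show ?thesis using B by linarith
  qed
  define lam where "lam = (\<integral>\<^sup>+x. ennreal (\<bar>u x\<bar> * w x) \<partial>M)"
  have lamL: "lam \<le> lux_norm E u" unfolding lam_def using H modular_of_fin[OF uL Eu] by blast
  define l0 where "l0 = max 1 (enn2real (E u))"
  have l0: "0 < l0" "1 \<le> l0" by (auto simp: l0_def)
  have "E (\<lambda>x. u x / l0) = E (\<lambda>x. (1 / l0) * u x)" by simp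
  also have "\<dots> \<le> ennreal (1 / l0) * E u" using l0 by (intro E_scale[OF nopf uL]) auto
  also have "\<dots> = ennreal (enn2real (E u) / l0)"
  proof -
    obtain r where r: "E u = ennreal r" "0 \<le> r" using Eu by (cases "E u" rule: ennreal_cases) auto
    have "ennreal (1 / l0) * ennreal r = ennreal (1 / l0 * r)" using l0 r by (intro ennreal_mult[symmetric]) auto
    then show ?thesis using r by simp
  qed
  also have "\<dots> \<le> 1" using l0 by (simp add: l0_def)
  finally have "E (\<lambda>x. u x / l0) \<le> 1" .
  then have "lux_norm E u \<le> ennreal l0" unfolding lux_norm_def using l0 by (intro Inf_lower) auto
  with lamL have lam_le: "lam \<le> ennreal l0" by simp
  have intw: "integrable M (\<lambda>x. \<bar>u x\<bar> * w x)"
  proof (rule integrableI_nonneg)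
    show "AE x in M. 0 \<le> \<bar>u x\<bar> * w x" using w0 by (auto intro!: AE_I2)
    show "(\<integral>\<^sup>+x. ennreal (\<bar>u x\<bar> * w x) \<partial>M) < \<infinity>" using lam_le unfolding lam_def
      by (simp add: le_less_trans)
  qed simp
  define Lam where "Lam = (\<integral>x. \<bar>u x\<bar> * w x \<partial>M)"
  have lamLam: "lam = ennreal Lam" unfolding lam_def Lam_def using intw w0
    by (intro nn_integral_eq_integral) (auto intro!: AE_I2)
  have Lam0: "0 \<le> Lam" unfolding Lam_def using w0 by (intro integral_nonneg_AE) (auto intro!: AE_I2)
  have Lam_l0: "Lam \<le> l0" using lam_le Lam0 l0 by (simp add: lamLam)
  have "(\<integral>x. u x * h x \<partial>M) \<le> (\<integral>x. \<bar>u x\<bar> * w x / 2 \<partial>M)"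
  proof (rule integral_mono_AE)
    show "integrable M (\<lambda>x. u x * h x)" using uL hL by (rule L2_prod)
    show "integrable M (\<lambda>x. \<bar>u x\<bar> * w x / 2)" using intw by simp
    show "AE x in M. u x * h x \<le> \<bar>u x\<bar> * w x / 2"
    proof (intro AE_I2)
      fix x assume x: "x \<in> space M"
      have "u x * h x \<le> \<bar>u x\<bar> * h x" using hle[OF x] by (intro mult_right_mono) auto
      also have "\<dots> \<le> \<bar>u x\<bar> * (w x / 2)" using hle[OF x] by (intro mult_left_mono) auto
      finally show "u x * h x \<le> \<bar>u x\<bar> * w x / 2" by simp
    qed
  qed
  also have "\<dots> = Lam / 2" unfolding Lam_def by simp
  finally have "enn2real (E u) \<le> Lam / 2" using Bu by linarith
  then have "Lam \<le> 1" using Lam_l0 Lam0 unfolding l0_def by (auto simp: max_def split: if_splits)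
  have "(\<integral>\<^sup>+x. ennreal (u x) * ennreal (w x) \<partial>M) \<le> lam"
    unfolding lam_def by (intro nn_integral_mono enn_mult_abs_le w0)
  also have "\<dots> \<le> 1" using \<open>Lam \<le> 1\<close> by (simp add: lamLam)
  finally show ?thesis unfolding u_def .
qed

lemma dir21:
  assumes wm[measurable]: "w \<in> borel_measurable M" and wpos: "\<forall>x\<in>space M. 0 < w x"
    and H: "\<forall>f\<in>modular_space E (L2 M). (\<integral>\<^sup>+x. ennreal (\<bar>f x\<bar> * w x) \<partial>M) \<le> lux_norm E f"
  shows "\<exists>g. g \<in> borel_measurable M \<and> (\<forall>x\<in>space M. 0 < g x) \<and>
              (AE x in M. green M E (\<lambda>x. ennreal (g x)) x < \<infinity>)"
proof (intro exI conjI)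
  define g where "g x = w x / 2" for x
  show gm[measurable]: "g \<in> borel_measurable M" unfolding g_def by measurable
  show "\<forall>x\<in>space M. 0 < g x" using wpos by (simp add: g_def)
  define G where "G x = ennreal (g x)" for x
  have Gm[measurable]: "G \<in> borel_measurable M" unfolding G_def by measurable
  define u where "u m n = resolvent M E (1 / real (Suc m)) (approx M G n)" for m n
  have um[measurable]: "u m n \<in> borel_measurable M" for m n unfolding u_def using resa_meas[OF sf nopf Gm] .
  have bnd: "(\<integral>\<^sup>+x. ennreal (u m n x) * ennreal (w x) \<partial>M) \<le> 1" for m n
    unfolding u_def
  proof (rule key21[OF alpha_pos[OF sf nopf] approx_L2[OF sf Gm] _ wm _ H])
    fix x assume x: "x \<in> space M"
    have "0 \<le> g x" using wpos x by (simp add: g_def less_imp_le)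
    then show "0 \<le> approx M G n x \<and> approx M G n x \<le> w x / 2"
      using approx_le[of g x M n] by (simp add: approx_nonneg G_def[abs_def] g_def)
  next
    fix x assume "x \<in> space M" then show "0 \<le> w x" using wpos by (simp add: less_imp_le)
  qed
  have mon_n: "AE x in M. u m n x \<le> u m (Suc n) x" for m n
    unfolding u_def by (intro res_mono[OF nopf alpha_pos[OF sf nopf] approx_L2[OF sf Gm] approx_L2[OF sf Gm]] approx_mono_n[OF sf])
  have mon_m: "AE x in M. u m n x \<le> u (Suc m) n x" for m n
    unfolding u_def by (intro res_mono_alpha[OF nopf _ _ approx_L2[OF sf Gm]] approx_nonneg) (auto simp: frac_le)
  define R where "R m x = (SUP n. ennreal (u m n x))" for m x
  have Rm[measurable]: "R m \<in> borel_measurable M" for m unfolding R_def by measurable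
  have Rbnd: "(\<integral>\<^sup>+x. R m x * ennreal (w x) \<partial>M) \<le> 1" for m
  proof -
    have "(\<integral>\<^sup>+x. R m x * ennreal (w x) \<partial>M) = (\<integral>\<^sup>+x. (SUP n. ennreal (u m n x) * ennreal (w x)) \<partial>M)"
      unfolding R_def by (simp add: SUP_mult_right_ennreal)
    also have "\<dots> = (SUP n. \<integral>\<^sup>+x. ennreal (u m n x) * ennreal (w x) \<partial>M)"
    proof (rule nn_integral_monotone_convergence_SUP_AE)
      show "AE x in M. ennreal (u m n x) * ennreal (w x) \<le> ennreal (u m (Suc n) x) * ennreal (w x)" for n
        using mon_n[of m n] by eventually_elim (intro mult_right_mono ennreal_leI, auto)
    qed measurable
    also have "\<dots> \<le> 1" using bnd by (intro SUP_least) auto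
    finally show ?thesis .
  qed
  have Rmon: "AE x in M. R m x \<le> R (Suc m) x" for m
  proof -
    have "AE x in M. \<forall>n. u m n x \<le> u (Suc m) n x" unfolding AE_all_countable using mon_m by blast
    then show ?thesis unfolding R_def by eventually_elim (intro SUP_mono' ennreal_leI, blast)
  qed
  have green_R: "green M E G x = (SUP m. R m x)" for x unfolding R_def u_def by (simp add: green_def resolvent_ext_def)
  have "(\<integral>\<^sup>+x. green M E G x * ennreal (w x) \<partial>M) = (\<integral>\<^sup>+x. (SUP m. R m x * ennreal (w x)) \<partial>M)"
    unfolding green_R by (simp add: SUP_mult_right_ennreal)
  also have "\<dots> = (SUP m. \<integral>\<^sup>+x. R m x * ennreal (w x) \<partial>M)"
  proof (rule nn_integral_monotone_convergence_SUP_AE)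
    show "AE x in M. R m x * ennreal (w x) \<le> R (Suc m) x * ennreal (w x)" for m
      using Rmon[of m] by eventually_elim (intro mult_right_mono, auto)
  qed measurable
  also have "\<dots> \<le> 1" using Rbnd by (intro SUP_least) auto
  finally have "(\<integral>\<^sup>+x. green M E G x * ennreal (w x) \<partial>M) \<noteq> \<infinity>" by (auto simp: top_unique)
  then have "AE x in M. green M E G x * ennreal (w x) \<noteq> \<infinity>"
    by (intro nn_integral_PInf_AE) (use green_meas[OF sf nopf Gm] in measurable)
  then show "AE x in M. green M E (\<lambda>x. ennreal (g x)) x < \<infinity>"
  proof (rule AE_mp, intro AE_I2 impI)
    fix x assume x: "x \<in> space M" and fin: "green M E G x * ennreal (w x) \<noteq> \<infinity>"
    have "ennreal (w x) \<noteq> 0" using wpos x by (simp add: ennreal_eq_0_iff not_le)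
    then have "green M E G x \<noteq> \<infinity>" using fin by (auto simp: ennreal_mult_eq_top_iff)
    then show "green M E (\<lambda>x. ennreal (g x)) x < \<infinity>" unfolding G_def[abs_def] by (simp add: less_top)
  qed
qed

end


lemma pw_split: "0 \<le> p \<Longrightarrow> 0 \<le> q \<Longrightarrow> 0 < K \<Longrightarrow> p * q \<le> min p (K * q) * q + p\<^sup>2 / K"
  for p q K :: real
proof (cases "p \<le> K * q")
  case True
  assume "0 \<le> p" "0 \<le> q" "0 < K"
  then show ?thesis using True by (simp add: min_def)
next
  case False
  assume p: "0 \<le> p" and q: "0 \<le> q" and K: "0 < K"
  have "K * q < p" using False by simp
  then have "q < p / K" using K by (simp add: field_simps)
  then have "p * q \<le> p * (p / K)" using p by (intro mult_left_mono) auto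
  also have "\<dots> = p\<^sup>2 / K" by (simp add: power2_eq_square)
  finally have "p * q \<le> p\<^sup>2 / K" .
  moreover have "0 \<le> K * q * q" using K q by simp
  ultimately show ?thesis using False by (simp add: min_def)
qed

lemma weak_null:
  fixes \<psi> :: "nat \<Rightarrow> 'a \<Rightarrow> real"
  assumes \<psi>m[measurable]: "\<And>n. \<psi> n \<in> borel_measurable M" and \<psi>0: "\<And>n x. 0 \<le> \<psi> n x"
    and \<psi>sq: "\<And>n. integrable M (\<lambda>x. (\<psi> n x)\<^sup>2)" and bnd: "\<And>n. (\<integral>x. (\<psi> n x)\<^sup>2 \<partial>M) \<le> B"
    and lim: "AE x in M. (\<lambda>n. \<psi> n x) \<longlonglongrightarrow> 0"
    and \<phi>L: "\<phi> \<in> L2 M" and \<phi>0: "\<And>x. 0 \<le> \<phi> x"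
  shows "(\<lambda>n. \<integral>x. \<psi> n x * \<phi> x \<partial>M) \<longlonglongrightarrow> 0"
proof (rule LIMSEQ_I)
  fix r :: real assume r: "0 < r"
  have \<phi>m[measurable]: "\<phi> \<in> borel_measurable M" using \<phi>L by (rule L2_meas)
  have \<psi>L: "\<psi> n \<in> L2 M" for n using \<psi>sq by (intro L2_I) auto
  define K where "K = 2 * (\<bar>B\<bar> + 1) / r"
  have K0: "0 < K" using r by (simp add: K_def add_pos_nonneg)
  have "(\<lambda>n. \<integral>x. min (\<psi> n x) (K * \<phi> x) * \<phi> x \<partial>M) \<longlonglongrightarrow> (\<integral>x. 0 \<partial>M)"
  proof (rule integral_dominated_convergence[where w="\<lambda>x. K * (\<phi> x)\<^sup>2"])
    show "integrable M (\<lambda>x. K * (\<phi> x)\<^sup>2)" using \<phi>L by (intro integrable_mult_right L2_sq)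
    show "AE x in M. (\<lambda>n. min (\<psi> n x) (K * \<phi> x) * \<phi> x) \<longlonglongrightarrow> 0"
      using lim
    proof eventually_elim
      case (elim x)
      have "(\<lambda>n. min (\<psi> n x) (K * \<phi> x) * \<phi> x) \<longlonglongrightarrow> min 0 (K * \<phi> x) * \<phi> x"
        by (intro tendsto_intros elim)
      moreover have "min 0 (K * \<phi> x) * \<phi> x = 0" using K0 \<phi>0[of x] by (simp add: min_def)
      ultimately show ?case by simp
    qed
    show "AE x in M. norm (min (\<psi> n x) (K * \<phi> x) * \<phi> x) \<le> K * (\<phi> x)\<^sup>2" for n
    proof (intro AE_I2)
      fix x
      have a: "0 \<le> min (\<psi> n x) (K * \<phi> x)" using \<psi>0[of n x] \<phi>0[of x] K0 by simp
      have "min (\<psi> n x) (K * \<phi> x) * \<phi> x \<le> (K * \<phi> x) * \<phi> x"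
        using \<phi>0[of x] by (intro mult_right_mono) auto
      then show "norm (min (\<psi> n x) (K * \<phi> x) * \<phi> x) \<le> K * (\<phi> x)\<^sup>2"
        using a \<phi>0[of x] by (simp add: power2_eq_square mult.assoc)
    qed
  qed measurable
  then have "(\<lambda>n. \<integral>x. min (\<psi> n x) (K * \<phi> x) * \<phi> x \<partial>M) \<longlonglongrightarrow> 0" by simp
  from LIMSEQ_D[OF this, of "r/2"] r
  obtain N where N: "\<And>n. n \<ge> N \<Longrightarrow> norm ((\<integral>x. min (\<psi> n x) (K * \<phi> x) * \<phi> x \<partial>M) - 0) < r / 2"
    by auto
  show "\<exists>no. \<forall>n\<ge>no. norm ((\<integral>x. \<psi> n x * \<phi> x \<partial>M) - 0) < r"
  proof (intro exI allI impI)
    fix n assume n: "N \<le> n"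
    have intm: "integrable M (\<lambda>x. min (\<psi> n x) (K * \<phi> x) * \<phi> x)"
    proof (rule Bochner_Integration.integrable_bound)
      show "integrable M (\<lambda>x. K * (\<phi> x)\<^sup>2)" using \<phi>L by (intro integrable_mult_right L2_sq)
      show "AE x in M. norm (min (\<psi> n x) (K * \<phi> x) * \<phi> x) \<le> norm (K * (\<phi> x)\<^sup>2)"
      proof (intro AE_I2)
        fix x
        have a: "0 \<le> min (\<psi> n x) (K * \<phi> x)" using \<psi>0[of n x] \<phi>0[of x] K0 by simp
        have "min (\<psi> n x) (K * \<phi> x) * \<phi> x \<le> (K * \<phi> x) * \<phi> x"
          using \<phi>0[of x] by (intro mult_right_mono) auto
        then show "norm (min (\<psi> n x) (K * \<phi> x) * \<phi> x) \<le> norm (K * (\<phi> x)\<^sup>2)"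
          using a \<phi>0[of x] K0 by (simp add: power2_eq_square mult.assoc)
      qed
    qed measurable
    have i1: "integrable M (\<lambda>x. \<psi> n x * \<phi> x)" using \<psi>L \<phi>L by (rule L2_prod)
    have i2: "integrable M (\<lambda>x. (\<psi> n x)\<^sup>2 / K)" using \<psi>sq by simp
    have nn: "0 \<le> (\<integral>x. \<psi> n x * \<phi> x \<partial>M)" using \<psi>0 \<phi>0 by (intro integral_nonneg_AE) auto
    have "(\<integral>x. \<psi> n x * \<phi> x \<partial>M) \<le> (\<integral>x. min (\<psi> n x) (K * \<phi> x) * \<phi> x + (\<psi> n x)\<^sup>2 / K \<partial>M)"
      using i1 intm i2 \<psi>0 \<phi>0 K0 by (intro integral_mono pw_split Bochner_Integration.integrable_add) auto
    also have "\<dots> = (\<integral>x. min (\<psi> n x) (K * \<phi> x) * \<phi> x \<partial>M) + (\<integral>x. (\<psi> n x)\<^sup>2 \<partial>M) / K"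
      using intm i2 by simp
    also have "\<dots> < r / 2 + r / 2"
    proof (rule add_less_le_mono)
      show "(\<integral>x. min (\<psi> n x) (K * \<phi> x) * \<phi> x \<partial>M) < r / 2" using N[OF n] by simp
      have "(\<integral>x. (\<psi> n x)\<^sup>2 \<partial>M) / K \<le> \<bar>B\<bar> / K" using bnd[of n] K0 by (intro divide_right_mono) auto
      also have "\<dots> \<le> r / 2"
      proof -
        have "K * (r / 2) = \<bar>B\<bar> + 1" using r by (simp add: K_def)
        then have "\<bar>B\<bar> \<le> K * (r / 2)" by simp
        then show ?thesis using K0 by (simp add: pos_divide_le_eq mult.commute)
      qed
      finally show "(\<integral>x. (\<psi> n x)\<^sup>2 \<partial>M) / K \<le> r / 2" .
    qed
    finally show "norm ((\<integral>x. \<psi> n x * \<phi> x \<partial>M) - 0) < r" using nn by simp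
  qed
qed


lemma h_props:
  fixes g k G :: real
  assumes "0 < g" "0 < k" "0 \<le> G"
  defines "h \<equiv> min 1 (min g k) / (1 + G)"
  shows "0 < h" "h \<le> g" "h \<le> k" "h \<le> 1" "h * G \<le> k" "h\<^sup>2 \<le> k"
proof -
  define m where "m = min 1 (min g k)"
  have m: "0 < m" "m \<le> 1" "m \<le> g" "m \<le> k" using assms by (auto simp: m_def)
  have d: "1 \<le> 1 + G" using assms by simp
  have h: "h = m / (1 + G)" by (simp add: h_def m_def)
  show h0: "0 < h" unfolding h using m d by simp
  have hm: "h \<le> m" unfolding h using m d by (simp add: divide_le_eq)
  then show "h \<le> g" "h \<le> k" "h \<le> 1" using m by auto
  have "h * G = m * (G / (1 + G))" unfolding h by simp
  also have "\<dots> \<le> m * 1" using m assms by (intro mult_left_mono) auto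
  finally show "h * G \<le> k" using m by simp
  have "h\<^sup>2 \<le> h * 1" unfolding power2_eq_square using h0 hm m by (intro mult_left_mono) auto
  then show "h\<^sup>2 \<le> k" using hm m by simp
qed

context
  fixes M :: "'a measure" and E :: "('a \<Rightarrow> real) \<Rightarrow> ennreal"
  assumes sf: "sigma_finite_measure M" and nopf: "nonlinear_order_preserving_form M E"
begin

lemma dir12:
  assumes gm[measurable]: "g \<in> borel_measurable M" and gpos: "\<forall>x\<in>space M. 0 < g x"
    and gfin: "AE x in M. green M E (\<lambda>x. ennreal (g x)) x < \<infinity>"
  shows "\<exists>w. w \<in> borel_measurable M \<and> (\<forall>x\<in>space M. 0 < w x) \<and>
              (\<forall>f\<in>modular_space E (L2 M). (\<integral>\<^sup>+x. ennreal (\<bar>f x\<bar> * w x) \<partial>M) \<le> lux_norm E f)"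
proof -
  define G where "G x = ennreal (g x)" for x
  have Gm[measurable]: "G \<in> borel_measurable M" unfolding G_def by measurable
  have greenGm[measurable]: "green M E G \<in> borel_measurable M" using green_meas[OF sf nopf Gm] .
  obtain k where km[measurable]: "k \<in> borel_measurable M" and kfin: "integral\<^sup>N M k \<noteq> \<infinity>"
    and kpos: "\<forall>x\<in>space M. 0 < k x \<and> k x < \<infinity>"
    using sigma_finite_measure.Ex_finite_integrable_function[OF sf] by blast
  define kr where "kr x = enn2real (k x)" for x
  have krm[measurable]: "kr \<in> borel_measurable M" unfolding kr_def by measurable
  have krpos: "0 < kr x" if "x \<in> space M" for x
    using kpos that by (auto simp: kr_def enn2real_positive_iff less_top)
  have kr_int: "integrable M kr"
  proof (rule integrableI_nonneg)
    show "AE x in M. 0 \<le> kr x" by (simp add: kr_def)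
    have "(\<integral>\<^sup>+x. ennreal (kr x) \<partial>M) = integral\<^sup>N M k"
      using kpos by (intro nn_integral_cong) (auto simp: kr_def less_top)
    then show "(\<integral>\<^sup>+x. ennreal (kr x) \<partial>M) < \<infinity>" using kfin by (simp add: less_top)
  qed simp
  have kr0: "0 \<le> kr x" for x by (simp add: kr_def)
  define K where "K = (\<integral>x. kr x \<partial>M)"
  have K0: "0 \<le> K" unfolding K_def by (intro integral_nonneg_AE) (simp add: kr_def)
  define Gr where "Gr x = enn2real (green M E G x)" for x
  have Grm[measurable]: "Gr \<in> borel_measurable M" unfolding Gr_def by measurable
  have Gr0: "0 \<le> Gr x" for x by (simp add: Gr_def)
  define h where "h x = min 1 (min (g x) (kr x)) / (1 + Gr x)" for x
  have hm[measurable]: "h \<in> borel_measurable M" unfolding h_def by measurable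
  have hp: "0 < h x" "h x \<le> g x" "h x \<le> kr x" "h x \<le> 1" "h x * Gr x \<le> kr x" "(h x)\<^sup>2 \<le> kr x"
    if "x \<in> space M" for x
    unfolding h_def using h_props[OF gpos[rule_format, OF that] krpos[OF that] Gr0[of x]] by blast+
  have hL: "h \<in> L2 M"
  proof (rule L2_I)
    show "integrable M (\<lambda>x. (h x)\<^sup>2)"
      by (rule Bochner_Integration.integrable_bound[OF kr_int]) (use hp kr0 in \<open>auto intro!: AE_I2\<close>)
  qed simp
  define H where "H x = ennreal (h x)" for x
  have Hm[measurable]: "H \<in> borel_measurable M" unfolding H_def by measurable
  have gHG: "AE x in M. green M E H x \<le> green M E G x"
    using hp by (intro green_mono[OF sf nopf Hm Gm]) (auto simp: H_def G_def intro: ennreal_leI)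
  define \<alpha> where "\<alpha> n = 1 / real (Suc n)" for n
  have a0: "0 < \<alpha> n" for n by (simp add: \<alpha>_def)
  define hn where "hn n = approx M H n" for n
  have hnL: "hn n \<in> L2 M" for n unfolding hn_def using approx_L2[OF sf Hm] .
  have hnm[measurable]: "hn n \<in> borel_measurable M" for n using hnL[of n] by (rule L2_meas)
  have hn0: "0 \<le> hn n x" for n x unfolding hn_def by (rule approx_nonneg)
  have hn_le: "hn n x \<le> h x" if "x \<in> space M" for n x
    unfolding hn_def H_def using hp(1)[OF that] by (intro approx_le) simp
  have hn_lim: "(\<lambda>n. hn n x) \<longlonglongrightarrow> h x" if "x \<in> space M" for x
    unfolding hn_def H_def using hp(1)[OF that] by (intro approx_lim[OF sf that]) simp
  define u where "u n = resolvent M E (\<alpha> n) (hn n)" for n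
  have uL: "u n \<in> L2 M" for n unfolding u_def using res_L2[OF nopf a0 hnL] .
  have um[measurable]: "u n \<in> borel_measurable M" for n using uL by (rule L2_meas)
  have u_green: "ennreal (u n x) \<le> green M E H x" for n x
  proof -
    have "ennreal (u n x) \<le> (SUP n'. ennreal (resolvent M E (1 / real (Suc n)) (approx M H n') x))"
      unfolding u_def \<alpha>_def hn_def by (rule SUP_upper) simp
    also have "\<dots> \<le> green M E H x" unfolding green_def resolvent_ext_def by (rule SUP_upper[where i=n]) simp
    finally show ?thesis .
  qed
  have uGr: "AE x in M. \<forall>n. u n x \<le> Gr x"
    using gfin gHG
  proof eventually_elim
    case (elim x)
    show ?case
    proof
      fix n
      have "ennreal (u n x) \<le> green M E G x" using u_green[of n x] elim(2) by (rule order_trans)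
      also have "\<dots> = ennreal (Gr x)" using elim by (simp add: Gr_def G_def[abs_def] less_top)
      finally show "u n x \<le> Gr x" using Gr0[of x] by (cases "0 \<le> u n x") (auto simp: ennreal_le_iff)
    qed
  qed
  define C where "C = 1 + K"
  have C0: "0 < C" using K0 by (simp add: C_def)
  define w where "w x = h x / C" for x
  have main: "(\<integral>\<^sup>+x. ennreal (\<bar>f x\<bar> * w x) \<partial>M) \<le> ennreal l"
    if fL: "f \<in> L2 M" and l: "0 < l" and Efl: "E (\<lambda>x. f x / l) \<le> 1" for f l
  proof -
    define \<phi> where "\<phi> x = \<bar>f x / l\<bar>" for x
    have \<phi>L: "\<phi> \<in> L2 M" unfolding \<phi>_def using fL by (intro L2_abs L2_div)
    have \<phi>0: "0 \<le> \<phi> x" for x by (simp add: \<phi>_def)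
    have \<phi>m[measurable]: "\<phi> \<in> borel_measurable M" using \<phi>L by (rule L2_meas)
    have E\<phi>: "E \<phi> \<le> 1" unfolding \<phi>_def[abs_def] using E_abs[OF nopf L2_div[OF fL]] Efl by (rule order_trans)
    then have E\<phi>fin: "E \<phi> < \<infinity>" by (simp add: le_less_trans)
    have Er\<phi>: "enn2real (E \<phi>) \<le> 1" using E\<phi> by (intro enn2real_leI) auto
    have step: "(\<integral>x. hn n x * \<phi> x \<partial>M) \<le> 1 + K + (\<integral>x. \<alpha> n * max (u n x) 0 * \<phi> x \<partial>M)" for n
    proof -
      have var: "(\<integral>x. (hn n x - \<alpha> n * u n x) * (\<phi> x - u n x) \<partial>M) \<le> enn2real (E \<phi>) - enn2real (E (u n))"
        unfolding u_def by (rule res_var[OF nopf a0 hnL \<phi>L E\<phi>fin])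
      have i1: "integrable M (\<lambda>x. hn n x * \<phi> x)" using hnL \<phi>L by (rule L2_prod)
      have i2: "integrable M (\<lambda>x. \<alpha> n * u n x * \<phi> x)"
        using uL \<phi>L by (simp add: mult.assoc L2_prod)
      have i3: "integrable M (\<lambda>x. hn n x * u n x)" using hnL uL by (rule L2_prod)
      have i4: "integrable M (\<lambda>x. (hn n x - \<alpha> n * u n x) * (\<phi> x - u n x))"
        using hnL uL \<phi>L by (intro L2_prod L2_diff L2_scale)
      have i5: "integrable M (\<lambda>x. \<alpha> n * max (u n x) 0 * \<phi> x)"
      proof -
        have "(\<lambda>x. max (u n x) 0) \<in> L2 M" using uL L2_zero by (rule L2_max)
        then show ?thesis using \<phi>L by (simp add: mult.assoc L2_prod)
      qed
      have "(\<integral>x. hn n x * \<phi> x - \<alpha> n * u n x * \<phi> x - hn n x * u n x \<partial>M)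
          \<le> (\<integral>x. (hn n x - \<alpha> n * u n x) * (\<phi> x - u n x) \<partial>M)"
      proof (rule integral_mono)
        show "integrable M (\<lambda>x. hn n x * \<phi> x - \<alpha> n * u n x * \<phi> x - hn n x * u n x)"
          using i1 i2 i3 by auto
        show "integrable M (\<lambda>x. (hn n x - \<alpha> n * u n x) * (\<phi> x - u n x))" by (rule i4)
        fix x
        have "0 \<le> \<alpha> n * (u n x * u n x)" using a0[of n] by simp
        then show "hn n x * \<phi> x - \<alpha> n * u n x * \<phi> x - hn n x * u n x
          \<le> (hn n x - \<alpha> n * u n x) * (\<phi> x - u n x)" by (simp add: algebra_simps)
      qed
      also have "\<dots> \<le> 1" using var Er\<phi> enn2real_nonneg[of "E (u n)"] by linarith
      finally have A: "(\<integral>x. hn n x * \<phi> x \<partial>M) - (\<integral>x. \<alpha> n * u n x * \<phi> x \<partial>M) - (\<integral>x. hn n x * u n x \<partial>M) \<le> 1"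
        using i1 i2 i3 by simp
      have B: "(\<integral>x. hn n x * u n x \<partial>M) \<le> K"
        unfolding K_def
      proof (rule integral_mono_AE[OF i3 kr_int])
        show "AE x in M. hn n x * u n x \<le> kr x"
          using uGr
        proof (rule AE_mp, intro AE_I2 impI)
          fix x assume x: "x \<in> space M" and ux: "\<forall>n. u n x \<le> Gr x"
          show "hn n x * u n x \<le> kr x"
          proof (cases "0 \<le> u n x")
            case True
            have "hn n x * u n x \<le> h x * Gr x"
              using hn_le[OF x] hn0 True ux hp(1)[OF x] by (intro mult_mono) auto
            then show ?thesis using hp(5)[OF x] by simp
          next
            case False
            then have "hn n x * u n x \<le> 0" using hn0[of n x] by (simp add: mult_nonneg_nonpos)
            then show ?thesis using krpos[OF x] by simp
          qed
        qed
      qed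
      have C: "(\<integral>x. \<alpha> n * u n x * \<phi> x \<partial>M) \<le> (\<integral>x. \<alpha> n * max (u n x) 0 * \<phi> x \<partial>M)"
        using i2 i5 a0[of n] \<phi>0 by (intro integral_mono mult_right_mono mult_left_mono) auto
      show ?thesis using A B C by linarith
    qed
    have lim1: "(\<lambda>n. \<integral>x. hn n x * \<phi> x \<partial>M) \<longlonglongrightarrow> (\<integral>x. h x * \<phi> x \<partial>M)"
    proof (rule integral_dominated_convergence[where w="\<lambda>x. h x * \<phi> x"])
      show "integrable M (\<lambda>x. h x * \<phi> x)" using hL \<phi>L by (rule L2_prod)
      show "AE x in M. (\<lambda>n. hn n x * \<phi> x) \<longlonglongrightarrow> h x * \<phi> x"
        by (intro AE_I2 tendsto_intros hn_lim)
      show "AE x in M. norm (hn n x * \<phi> x) \<le> h x * \<phi> x" for n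
        using hn_le hn0 \<phi>0 by (intro AE_I2) (auto intro!: mult_right_mono)
    qed measurable
    define \<psi> where "\<psi> n x = \<alpha> n * max (u n x) 0" for n x
    have lim2: "(\<lambda>n. \<integral>x. \<psi> n x * \<phi> x \<partial>M) \<longlonglongrightarrow> 0"
    proof (rule weak_null[where B="4 * (\<integral>x. (h x)\<^sup>2 \<partial>M)"])
      show "\<psi> n \<in> borel_measurable M" for n unfolding \<psi>_def by measurable
      show "0 \<le> \<psi> n x" for n x unfolding \<psi>_def using a0[of n] by simp
      have \<psi>L: "\<psi> n \<in> L2 M" for n
      proof -
        have "(\<lambda>x. max (u n x) 0) \<in> L2 M" using uL L2_zero by (rule L2_max)
        then show ?thesis unfolding \<psi>_def by (rule L2_scale)
      qed
      show "integrable M (\<lambda>x. (\<psi> n x)\<^sup>2)" for n using \<psi>L by (rule L2_sq)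
      show "(\<integral>x. (\<psi> n x)\<^sup>2 \<partial>M) \<le> 4 * (\<integral>x. (h x)\<^sup>2 \<partial>M)" for n
      proof -
        have "(\<integral>x. (\<psi> n x)\<^sup>2 \<partial>M) \<le> (\<integral>x. (\<alpha> n * u n x)\<^sup>2 \<partial>M)"
        proof (rule integral_mono)
          show "integrable M (\<lambda>x. (\<psi> n x)\<^sup>2)" using \<psi>L by (rule L2_sq)
          show "integrable M (\<lambda>x. (\<alpha> n * u n x)\<^sup>2)" using L2_scale[OF uL] by (rule L2_sq)
          fix x show "(\<psi> n x)\<^sup>2 \<le> (\<alpha> n * u n x)\<^sup>2"
            unfolding \<psi>_def power_mult_distrib using a0[of n]
            by (intro mult_left_mono) (auto simp: max_def power2_eq_square)
        qed
        also have "\<dots> \<le> 4 * (\<integral>x. (hn n x)\<^sup>2 \<partial>M)"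
          unfolding u_def by (rule res_L2bound[OF nopf a0 hnL])
        also have "\<dots> \<le> 4 * (\<integral>x. (h x)\<^sup>2 \<partial>M)"
        proof -
          have "(\<integral>x. (hn n x)\<^sup>2 \<partial>M) \<le> (\<integral>x. (h x)\<^sup>2 \<partial>M)"
            using hnL hL hn_le hn0 by (intro integral_mono_AE L2_sq AE_I2 power_mono) auto
          then show ?thesis by simp
        qed
        finally show ?thesis .
      qed
      show "AE x in M. (\<lambda>n. \<psi> n x) \<longlonglongrightarrow> 0"
        using uGr
      proof eventually_elim
        case (elim x)
        show ?case
        proof (rule tendsto_sandwich[of "\<lambda>_. 0" _ _ "\<lambda>n. \<alpha> n * Gr x"])
          show "\<forall>\<^sub>F n in sequentially. 0 \<le> \<psi> n x" unfolding \<psi>_def using a0 by (simp add: less_imp_le)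
          show "\<forall>\<^sub>F n in sequentially. \<psi> n x \<le> \<alpha> n * Gr x"
            unfolding \<psi>_def using a0 elim Gr0[of x] by (auto intro!: mult_left_mono simp: less_imp_le)
          have "(\<lambda>n. \<alpha> n) \<longlonglongrightarrow> 0" unfolding \<alpha>_def by (rule LIMSEQ_Suc[OF lim_const_over_n]) 
          then show "(\<lambda>n. \<alpha> n * Gr x) \<longlonglongrightarrow> 0" by (intro tendsto_mult_left_zero)
        qed simp
      qed
    qed (use \<phi>L \<phi>0 in auto)
    have "(\<integral>x. h x * \<phi> x \<partial>M) \<le> 1 + K + 0"
    proof (rule LIMSEQ_le[OF lim1])
      show "(\<lambda>n. 1 + K + (\<integral>x. \<psi> n x * \<phi> x \<partial>M)) \<longlonglongrightarrow> 1 + K + 0"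
        by (intro tendsto_add tendsto_const lim2)
      show "\<exists>N. \<forall>n\<ge>N. (\<integral>x. hn n x * \<phi> x \<partial>M) \<le> 1 + K + (\<integral>x. \<psi> n x * \<phi> x \<partial>M)"
        using step unfolding \<psi>_def by auto
    qed
    then have hphi: "(\<integral>x. h x * \<phi> x \<partial>M) \<le> C" by (simp add: C_def)
    have intfw: "integrable M (\<lambda>x. \<bar>f x\<bar> * w x)"
      unfolding w_def using L2_abs[OF fL] L2_div[OF hL] by (rule L2_prod)
    have eqn: "(\<integral>\<^sup>+x. ennreal (\<bar>f x\<bar> * w x) \<partial>M) = ennreal (\<integral>x. \<bar>f x\<bar> * w x \<partial>M)"
      using intfw hp(1) C0 by (intro nn_integral_eq_integral) (auto intro!: AE_I2 simp: w_def less_imp_le)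
    have "(\<integral>x. \<bar>f x\<bar> * w x \<partial>M) = l / C * (\<integral>x. h x * \<phi> x \<partial>M)"
    proof -
      have "(\<lambda>x. \<bar>f x\<bar> * w x) = (\<lambda>x. l / C * (h x * \<phi> x))"
        using l C0 by (auto simp: w_def \<phi>_def fun_eq_iff abs_divide field_simps)
      then show ?thesis by simp
    qed
    also have "\<dots> \<le> l / C * C" using hphi l C0 by (intro mult_left_mono) auto
    also have "\<dots> = l" using C0 by simp
    finally have r: "(\<integral>x. \<bar>f x\<bar> * w x \<partial>M) \<le> l" .
    show ?thesis unfolding eqn using r by (rule ennreal_leI)
  qed
  show ?thesis
  proof (intro exI conjI ballI)
    show "w \<in> borel_measurable M" unfolding w_def by measurable
    show "0 < w x" if "x \<in> space M" for x using hp(1)[OF that] C0 by (simp add: w_def)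
    fix f assume f: "f \<in> modular_space E (L2 M)"
    then have fL: "f \<in> L2 M" by (simp add: modular_space_def)
    show "(\<integral>\<^sup>+x. ennreal (\<bar>f x\<bar> * w x) \<partial>M) \<le> lux_norm E f"
      unfolding lux_norm_def using main[OF fL] by (auto intro!: Inf_greatest)
  qed
qed

end


lemma ae_subseq:
  assumes sf: "sigma_finite_measure M"
    and fsm[measurable]: "\<And>n. fs n \<in> borel_measurable M" and Fm[measurable]: "F \<in> borel_measurable M"
    and conv: "loc_conv_meas M fs F"
    and freq: "\<And>N. \<exists>n\<ge>N. Q n"
  shows "\<exists>r. (\<forall>k. Q (r k)) \<and> (AE x in M. (\<lambda>k. fs (r k) x) \<longlonglongrightarrow> F x)"
proof -
  define A where "A = exhaustion M"
  have A[measurable]: "A k \<in> sets M" for k unfolding A_def using exh_sets[OF sf] .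
  have Afin: "emeasure M (A k) < \<infinity>" for k unfolding A_def using exhaustion_props(3)[OF sf, of k] by (simp add: less_top)
  have Acov: "\<Union>(range A) = space M" unfolding A_def using exhaustion_props(2)[OF sf] .
  have Ainc: "incseq A" unfolding A_def using exhaustion_props(4)[OF sf] .
  define B where "B k n = {x \<in> space M. x \<in> A k \<and> (1/2::real)^k < \<bar>fs n x - F x\<bar>}" for k n
  have B[measurable]: "B k n \<in> sets M" for k n unfolding B_def by measurable
  have Beq: "{x \<in> A k. (1/2::real)^k < \<bar>fs n x - F x\<bar>} = B k n" for k n
    unfolding B_def using sets.sets_into_space[OF A[of k]] by auto
  have Blim: "(\<lambda>n. emeasure M (B k n)) \<longlonglongrightarrow> 0" for k
    using conv A[of k] Afin[of k] unfolding loc_conv_meas_def Beq[symmetric] by auto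
  have "\<exists>n. Q n \<and> emeasure M (B k n) < ennreal ((1/2)^k)" for k
  proof -
    have "eventually (\<lambda>n. emeasure M (B k n) < ennreal ((1/2)^k)) sequentially"
      using Blim[of k] by (rule order_tendstoD(2)) simp
    then obtain N where N: "\<And>n. n \<ge> N \<Longrightarrow> emeasure M (B k n) < ennreal ((1/2)^k)"
      by (auto simp: eventually_sequentially)
    obtain n where "n \<ge> N" "Q n" using freq by blast
    then show ?thesis using N by blast
  qed
  then obtain r where rQ: "\<And>k. Q (r k)" and rB: "\<And>k. emeasure M (B k (r k)) < ennreal ((1/2)^k)"
    by metis
  have "(\<integral>\<^sup>+x. (\<Sum>k. indicator (B k (r k)) x) \<partial>M) = (\<Sum>k. \<integral>\<^sup>+x. indicator (B k (r k)) x \<partial>M)"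
    by (intro nn_integral_suminf) measurable
  also have "\<dots> = (\<Sum>k. emeasure M (B k (r k)))" by simp
  also have "\<dots> \<le> (\<Sum>k. ennreal ((1/2)^k))" using rB by (intro suminf_le) (auto intro: less_imp_le)
  also have "\<dots> = ennreal (\<Sum>k. (1/2)^k)" by (intro suminf_ennreal2) auto
  also have "\<dots> < \<infinity>" by simp
  finally have "(\<integral>\<^sup>+x. (\<Sum>k. indicator (B k (r k)) x) \<partial>M) \<noteq> \<infinity>" by simp
  then have ae: "AE x in M. (\<Sum>k. indicator (B k (r k)) x :: ennreal) \<noteq> \<infinity>"
    by (intro nn_integral_PInf_AE) measurable
  have "AE x in M. (\<lambda>k. fs (r k) x) \<longlonglongrightarrow> F x"
    using ae
  proof (rule AE_mp, intro AE_I2 impI)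
    fix x assume x: "x \<in> space M" and fin: "(\<Sum>k. indicator (B k (r k)) x :: ennreal) \<noteq> \<infinity>"
    have "summable (\<lambda>k. indicator (B k (r k)) x :: real)"
      using fin by (intro summable_suminf_not_top) (auto simp: ennreal_indicator top_unique)
    then have "(\<lambda>k. indicator (B k (r k)) x :: real) \<longlonglongrightarrow> 0" by (rule summable_LIMSEQ_zero)
    then have ev1: "eventually (\<lambda>k. (indicator (B k (r k)) x :: real) < 1) sequentially"
      by (rule order_tendstoD(2)) simp
    obtain i where i: "x \<in> A i" using x Acov by auto
    have ev2: "eventually (\<lambda>k. x \<in> A k) sequentially"
      using i Ainc by (auto simp: eventually_sequentially incseq_def intro!: exI[of _ i])
    have "eventually (\<lambda>k. norm (fs (r k) x - F x) \<le> (1/2)^k) sequentially"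
      using ev1 ev2
    proof eventually_elim
      case (elim k)
      then have "x \<notin> B k (r k)" by (auto simp: indicator_def split: if_splits)
      then show ?case using elim x by (auto simp: B_def)
    qed
    then have "(\<lambda>k. fs (r k) x - F x) \<longlonglongrightarrow> 0"
      by (rule Lim_null_comparison) (intro LIMSEQ_power_zero, simp)
    then show "(\<lambda>k. fs (r k) x) \<longlonglongrightarrow> F x" by (rule LIM_zero_cancel)
  qed
  with rQ show ?thesis by blast
qed

context
  fixes M :: "'a measure" and E :: "('a \<Rightarrow> real) \<Rightarrow> ennreal"
  assumes sf: "sigma_finite_measure M" and nopf: "nonlinear_order_preserving_form M E"
begin

lemma part2:
  assumes wm[measurable]: "w \<in> borel_measurable M" and wpos: "\<forall>x\<in>space M. 0 < w x"
    and H: "\<forall>f\<in>modular_space E (L2 M). (\<integral>\<^sup>+x. ennreal (\<bar>f x\<bar> * w x) \<partial>M) \<le> lux_norm E f"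
  shows "\<forall>f\<in>modular_space (E_e M E) (borel_measurable M).
           (\<integral>\<^sup>+x. ennreal (\<bar>f x\<bar> * w x) \<partial>M) \<le> lux_norm (E_e M E) f"
proof (intro ballI)
  fix f assume "f \<in> modular_space (E_e M E) (borel_measurable M)"
  then have fm[measurable]: "f \<in> borel_measurable M" by (simp add: modular_space_def)
  show "(\<integral>\<^sup>+x. ennreal (\<bar>f x\<bar> * w x) \<partial>M) \<le> lux_norm (E_e M E) f"
    unfolding lux_norm_def
  proof (rule Inf_greatest)
    fix y assume "y \<in> {ennreal l |l. 0 < l \<and> E_e M E (\<lambda>x. f x / l) \<le> 1}"
    then obtain l where y: "y = ennreal l" and l: "0 < l" and Ee: "E_e M E (\<lambda>x. f x / l) \<le> 1" by blast
    define F where "F x = f x / l" for x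
    have Fm[measurable]: "F \<in> borel_measurable M" unfolding F_def by measurable
    have bnd1: "(\<integral>\<^sup>+x. ennreal (\<bar>F x\<bar> * w x) \<partial>M) \<le> 1"
    proof (rule ennreal_le_epsilon)
      fix e :: real assume e: "0 < e"
      define c where "c = 1 + e"
      have c: "1 < c" "0 < c" using e by (auto simp: c_def)
      have "E_e M E F < ennreal c"
        using Ee c unfolding F_def[abs_def] by (metis ennreal_1 ennreal_less_iff le_less_trans zero_le_one)
      then obtain fs where fsm: "\<And>n. fs n \<in> borel_measurable M" and fsc: "loc_conv_meas M fs F"
        and lim: "liminf (\<lambda>n. E_ext M E (fs n)) < ennreal c"
        unfolding E_e_def INF_less_iff by blast
      have freq: "\<exists>n\<ge>N. E_ext M E (fs n) < ennreal c" for N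
      proof (rule ccontr)
        assume "\<not> (\<exists>n\<ge>N. E_ext M E (fs n) < ennreal c)"
        then have "eventually (\<lambda>n. ennreal c \<le> E_ext M E (fs n)) sequentially"
          by (auto simp: eventually_sequentially not_less intro!: exI[of _ N])
        then have "ennreal c \<le> liminf (\<lambda>n. E_ext M E (fs n))" by (rule Liminf_bounded)
        with lim show False by simp
      qed
      obtain r where rQ: "\<And>k. E_ext M E (fs (r k)) < ennreal c"
        and rconv: "AE x in M. (\<lambda>k. fs (r k) x) \<longlonglongrightarrow> F x"
        using ae_subseq[OF sf fsm Fm fsc freq] by blast
      have gL: "fs (r k) \<in> L2 M" for k using rQ[of k] by (auto simp: E_ext_def split: if_splits)
      have gE: "E (fs (r k)) < ennreal c" for k using rQ[of k] gL[of k] by (simp add: E_ext_def)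
      have gbnd: "(\<integral>\<^sup>+x. ennreal (\<bar>fs (r k) x\<bar> * w x) \<partial>M) \<le> ennreal c" for k
      proof -
        have Efin: "E (fs (r k)) < \<infinity>" using gE[of k] ennreal_less_top[of c] unfolding infinity_ennreal_def by (rule less_trans)
        have "(\<integral>\<^sup>+x. ennreal (\<bar>fs (r k) x\<bar> * w x) \<partial>M) \<le> lux_norm E (fs (r k))"
          using H modular_of_fin[OF sf nopf gL Efin] by blast
        also have "\<dots> \<le> ennreal c" unfolding lux_norm_def
        proof (rule Inf_lower, intro CollectI exI conjI)
          have "E (\<lambda>x. fs (r k) x / c) = E (\<lambda>x. (1 / c) * fs (r k) x)" by simp
          also have "\<dots> \<le> ennreal (1 / c) * E (fs (r k))" using c by (intro E_scale[OF nopf gL]) auto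
          also have "\<dots> \<le> ennreal (1 / c) * ennreal c" using gE[of k] by (intro mult_left_mono) auto
          also have "\<dots> = 1" using c by (simp add: ennreal_mult[symmetric])
          finally show "E (\<lambda>x. fs (r k) x / c) \<le> 1" .
        qed (use c in auto)
        finally show ?thesis .
      qed
      have fsmr[measurable]: "fs (r k) \<in> borel_measurable M" for k using fsm .
      have "(\<integral>\<^sup>+x. ennreal (\<bar>F x\<bar> * w x) \<partial>M) = (\<integral>\<^sup>+x. liminf (\<lambda>k. ennreal (\<bar>fs (r k) x\<bar> * w x)) \<partial>M)"
      proof (rule nn_integral_cong_AE)
        show "AE x in M. ennreal (\<bar>F x\<bar> * w x) = liminf (\<lambda>k. ennreal (\<bar>fs (r k) x\<bar> * w x))"
          using rconv
        proof eventually_elim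
          case (elim x)
          have "(\<lambda>k. ennreal (\<bar>fs (r k) x\<bar> * w x)) \<longlonglongrightarrow> ennreal (\<bar>F x\<bar> * w x)"
            by (intro tendsto_ennrealI tendsto_intros elim)
          then show ?case by (rule lim_imp_Liminf[symmetric, rotated]) simp
        qed
      qed
      also have "\<dots> \<le> liminf (\<lambda>k. \<integral>\<^sup>+x. ennreal (\<bar>fs (r k) x\<bar> * w x) \<partial>M)"
        by (intro nn_integral_liminf) measurable
      also have "\<dots> \<le> ennreal c" using gbnd by (intro Liminf_le) auto
      also have "\<dots> = 1 + ennreal e" using e by (simp add: c_def ennreal_plus)
      finally show "(\<integral>\<^sup>+x. ennreal (\<bar>F x\<bar> * w x) \<partial>M) \<le> 1 + ennreal e" .
    qed
    have "(\<integral>\<^sup>+x. ennreal (\<bar>f x\<bar> * w x) \<partial>M) = (\<integral>\<^sup>+x. ennreal l * ennreal (\<bar>F x\<bar> * w x) \<partial>M)"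
    proof (rule nn_integral_cong)
      fix x assume x: "x \<in> space M"
      have eq: "\<bar>f x\<bar> * w x = l * (\<bar>F x\<bar> * w x)" using l by (simp add: F_def abs_divide)
      have m: "ennreal (l * (\<bar>F x\<bar> * w x)) = ennreal l * ennreal (\<bar>F x\<bar> * w x)"
        using l wpos x by (intro ennreal_mult) (auto simp: less_imp_le)
      show "ennreal (\<bar>f x\<bar> * w x) = ennreal l * ennreal (\<bar>F x\<bar> * w x)"
        unfolding eq by (rule m)
    qed
    also have "\<dots> = ennreal l * (\<integral>\<^sup>+x. ennreal (\<bar>F x\<bar> * w x) \<partial>M)"
      by (rule nn_integral_cmult) measurable
    also have "\<dots> \<le> ennreal l * 1" using bnd1 by (rule mult_left_mono) simp
    finally show "(\<integral>\<^sup>+x. ennreal (\<bar>f x\<bar> * w x) \<partial>M) \<le> y" by (simp add: y)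
  qed
qed

end

theorem theorem4p6:
  fixes M :: "'a measure" and E :: "('a \<Rightarrow> real) \<Rightarrow> ennreal"
  assumes "sigma_finite_measure M"
    and "nonlinear_order_preserving_form M E"
  shows "((\<exists>g. g \<in> borel_measurable M \<and> (\<forall>x\<in>space M. 0 < g x) \<and>
              (AE x in M. green M E (\<lambda>x. ennreal (g x)) x < \<infinity>))
          \<longleftrightarrow>
          (\<exists>w. w \<in> borel_measurable M \<and> (\<forall>x\<in>space M. 0 < w x) \<and>
              (\<forall>f\<in>modular_space E (L2 M). (\<integral>\<^sup>+x. ennreal (\<bar>f x\<bar> * w x) \<partial>M) \<le> lux_norm E f)))
      \<and> (Ee_exists M E \<longrightarrow>
          (\<forall>w. w \<in> borel_measurable M \<and> (\<forall>x\<in>space M. 0 < w x) \<and>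
              (\<forall>f\<in>modular_space E (L2 M). (\<integral>\<^sup>+x. ennreal (\<bar>f x\<bar> * w x) \<partial>M) \<le> lux_norm E f)
            \<longrightarrow> (\<forall>f\<in>modular_space (E_e M E) (borel_measurable M).
                  (\<integral>\<^sup>+x. ennreal (\<bar>f x\<bar> * w x) \<partial>M) \<le> lux_norm (E_e M E) f)))"
proof (intro conjI iffI impI allI)
  assume "\<exists>g. g \<in> borel_measurable M \<and> (\<forall>x\<in>space M. 0 < g x) \<and>
              (AE x in M. green M E (\<lambda>x. ennreal (g x)) x < \<infinity>)"
  then obtain g where "g \<in> borel_measurable M" "\<forall>x\<in>space M. 0 < g x"
    "AE x in M. green M E (\<lambda>x. ennreal (g x)) x < \<infinity>" by blast
  then show "\<exists>w. w \<in> borel_measurable M \<and> (\<forall>x\<in>space M. 0 < w x) \<and>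
              (\<forall>f\<in>modular_space E (L2 M). (\<integral>\<^sup>+x. ennreal (\<bar>f x\<bar> * w x) \<partial>M) \<le> lux_norm E f)"
    by (rule dir12[OF assms])
next
  assume "\<exists>w. w \<in> borel_measurable M \<and> (\<forall>x\<in>space M. 0 < w x) \<and>
              (\<forall>f\<in>modular_space E (L2 M). (\<integral>\<^sup>+x. ennreal (\<bar>f x\<bar> * w x) \<partial>M) \<le> lux_norm E f)"
  then obtain w where "w \<in> borel_measurable M" "\<forall>x\<in>space M. 0 < w x"
    "\<forall>f\<in>modular_space E (L2 M). (\<integral>\<^sup>+x. ennreal (\<bar>f x\<bar> * w x) \<partial>M) \<le> lux_norm E f" by blast
  then show "\<exists>g. g \<in> borel_measurable M \<and> (\<forall>x\<in>space M. 0 < g x) \<and>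
              (AE x in M. green M E (\<lambda>x. ennreal (g x)) x < \<infinity>)"
    by (rule dir21[OF assms])
next
  fix w
  assume "w \<in> borel_measurable M \<and> (\<forall>x\<in>space M. 0 < w x) \<and>
              (\<forall>f\<in>modular_space E (L2 M). (\<integral>\<^sup>+x. ennreal (\<bar>f x\<bar> * w x) \<partial>M) \<le> lux_norm E f)"
  then show "\<forall>f\<in>modular_space (E_e M E) (borel_measurable M).
                  (\<integral>\<^sup>+x. ennreal (\<bar>f x\<bar> * w x) \<partial>M) \<le> lux_norm (E_e M E) f"
    using part2[OF assms] by blast
qed

end
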